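(* Under the standing assumptions below, if there exist $a,b\in I_{\mathcal{C}}$ with $a<b$ such that $$\sum_{k=1}^{2n}(-1)^k\theta_kL_k(a)<\Omega_0L<\sum_{k=1}^{2n}(-1)^k\theta_kL_k(b),$$ then the periodic cylinder $\mathcal{C}$ is $\lambda$-stable. Moreover, the $\lambda$-stable periodic orbit contained in $\mathcal{C}$ passes through $(s,\hat\theta_0)$ for some base foot point $s\in(a,b)$.
   Context: Let $P$ be a simply connected polygon with $d$ sides labeled $1,\dots,d$, $\partial P$ oriented anticlockwise, and let $\Phi$ be its billiard map, written in coordinates $(s,\theta)$ ($s$ the arc-length parameter on $\partial P$, $\theta\in(-\pi/2,\pi/2)$ the oriented angle from the inward normal). $\beta_{i,j}$ is $\pi$ minus the angle formed by the oriented sides $i$ and $j$, so that the angle after a collision from side $i$ to side $j$ is $\beta_{i,j}-\theta$. For $\lambda>0$, $R_\lambda(s,\theta)=(s,\lambda\theta)$ and $\Phi_\lambda=R_\lambda\circ\Phi$. A periodic orbit $q$ of $\Phi$ is $\lambda^{+}$-stable (resp. $\lambda^-$-stable) if there are a strictly decreasing (resp. increasing) sequence $\lambda_n\to1$ and periodic orbits $q_n$ of $\Phi_{\lambda_n}$ hitting the same sequence of sides as $q$ with $q_n\to q$; a periodic cylinder (maximal family of parallel periodic orbits of $\Phi$ with common itinerary) is $\lambda$-stable if it contains a $\lambda^+$-stable orbit and a $\lambda^-$-stable orbit. Let $\ell_i$ be the line supporting side $i$ and $x_i$ its arc-length parametrization extending that of side $i$. For distinct sides $i,j$, $\Phi_{i,j}(s,\theta):=(s',\beta_{i,j}-\theta)$,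 where $x_j(s')$ is the intersection with $\ell_j$ of the line through $x_i(s)$ whose direction makes angle $\theta$ with the inward normal of side $i$; $t(s,\theta)$ is the oriented length of the segment from $x_i(s)$ to $x_j(s')$. Standing assumptions: $\mathcal{C}$ is a periodic cylinder of even period $2n>2$ with itinerary $i_0,\dots,i_{2n-1}$ (indices mod $2n$) and collision angles $\hat\theta_0,\dots,\hat\theta_{2n-1}$, with $\hat\theta_0=\frac{1}{2n}\sum_{k=0}^{2n-1}(-1)^{k+1}k\beta_{i_k,i_{k+1}}$; write $\theta_k:=\hat\theta_k$ (so $\theta_{2n}=\theta_0$). Define $\theta_0(\lambda):=\frac{1}{\lambda^{2n}-1}\sum_{k=0}^{2n-1}(-\lambda)^{2n-k}\beta_{i_k,i_{k+1}}$, $\theta_k(\lambda):=\lambda(\beta_{i_{k-1},i_k}-\theta_{k-1}(\lambda))$, and $F_k(s,\lambda):=\pi_1\circ R_\lambda\circ\Phi_{i_{k-1},i_k}\circ\cdots\circ R_\lambda\circ\Phi_{i_0,i_1}(s,\theta_0(\lambda))$ for $\lambda$ near $1$, $\pi_1(s,\theta)=s$. The base $I_{\mathcal{C}}$ is the open interval of $s$ such that $(s,\hat\theta_0)$ is a periodic point of $\Phi$ with the itinerary of $\mathcal{C}$ (base foot points). For $s\in I_{\mathcal{C}}$ let $s_0=s$, $s_k=F_k(s,1)$, $L_0(s)=0$ and $L_k(s):=\sum_{i=0}^{k-1}t(s_i,\theta_i)$ (segment from side $i_i$ to side $i_{i+1}$); $L:=L_{2n}(s)$ is the length of the cylinder,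 independent of $s$. Finally $\Omega_0:=\frac{1}{4n}\sum_{k=0}^{2n-1}(-1)^{k+1}k(2n-k)\beta_{i_k,i_{k+1}}$. *)

theory Defs
  imports "HOL-Analysis.Analysis"
begin

(* Polygon given by its vertices V 0, ..., V (d-1) (points of the plane = complex numbers).
   Side i (0 <= i < d) is the oriented segment from V i to V ((i+1) mod d).
   (The paper labels sides 1..d; we label them 0..d-1.) *)

definition nxt :: "nat \<Rightarrow> nat \<Rightarrow> nat" where
  "nxt d i = Suc i mod d"

definition side :: "(nat \<Rightarrow> complex) \<Rightarrow> nat \<Rightarrow> nat \<Rightarrow> complex set" where
  "side V d i = closed_segment (V i) (V (nxt d i))"

definition bdry :: "(nat \<Rightarrow> complex) \<Rightarrow> nat \<Rightarrow> complex set" where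
  "bdry V d = (\<Union>i<d. side V d i)"

(* simple closed polygon with d >= 3 sides, boundary oriented anticlockwise
   (positive signed area); its interior is then simply connected *)
definition simple_ccw_polygon :: "(nat \<Rightarrow> complex) \<Rightarrow> nat \<Rightarrow> bool" where
  "simple_ccw_polygon V d \<longleftrightarrow>
     3 \<le> d \<and> inj_on V {..<d} \<and>
     (\<forall>i<d. \<forall>j<d. i \<noteq> j \<longrightarrow>
        side V d i \<inter> side V d j \<subseteq> {V i, V (nxt d i)} \<inter> {V j, V (nxt d j)}) \<and>
     (\<Sum>i<d. Im (cnj (V i) * V (nxt d i))) > 0"

definition S0 :: "(nat \<Rightarrow> complex) \<Rightarrow> nat \<Rightarrow> nat \<Rightarrow> real" where
  "S0 V d i = (\<Sum>m<i. cmod (V (nxt d m) - V m))"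

definition u :: "(nat \<Rightarrow> complex) \<Rightarrow> nat \<Rightarrow> nat \<Rightarrow> complex" where
  "u V d i = (V (nxt d i) - V i) / complex_of_real (cmod (V (nxt d i) - V i))"

(* arc-length parametrisation x_i of the line l_i, extending that of side i *)
definition xl :: "(nat \<Rightarrow> complex) \<Rightarrow> nat \<Rightarrow> nat \<Rightarrow> real \<Rightarrow> complex" where
  "xl V d i s = V i + complex_of_real (s - S0 V d i) * u V d i"

definition on_side :: "(nat \<Rightarrow> complex) \<Rightarrow> nat \<Rightarrow> nat \<Rightarrow> real \<Rightarrow> bool" where
  "on_side V d i s \<longleftrightarrow> i < d \<and> S0 V d i < s \<and> s < S0 V d (Suc i)"

(* unit direction leaving side i making oriented angle theta with the inward normal
   \<i> * u_i (boundary anticlockwise); theta > 0 tilts towards the orientation of side i *)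
definition dir :: "(nat \<Rightarrow> complex) \<Rightarrow> nat \<Rightarrow> nat \<Rightarrow> real \<Rightarrow> complex" where
  "dir V d i \<theta> = \<i> * u V d i * cis (- \<theta>)"

(* beta_{i,j} = pi minus the oriented angle from side i to side j, normalised to (-pi,pi];
   with this normalisation the angle after a collision from side i to side j is beta_{i,j} - theta *)
definition beta :: "(nat \<Rightarrow> complex) \<Rightarrow> nat \<Rightarrow> nat \<Rightarrow> nat \<Rightarrow> real" where
  "beta V d i j = Arg (- u V d i * cnj (u V d j))"

(* one step of the billiard map Phi from side i to side j:
   (s,th) |-> (s',th') where x_j(s') is the first point of the boundary hit by the ray *)
definition bill :: "(nat \<Rightarrow> complex) \<Rightarrow> nat \<Rightarrow> nat \<Rightarrow> nat \<Rightarrow> real \<times> real \<Rightarrow> real \<times> real \<Rightarrow> bool" where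
  "bill V d i j p p' \<longleftrightarrow>
     on_side V d i (fst p) \<and> \<bar>snd p\<bar> < pi / 2 \<and>
     (let x = xl V d i (fst p); w = dir V d i (snd p);
          T = {t::real. 0 < t \<and> x + complex_of_real t * w \<in> bdry V d}
      in Inf T \<in> T \<and> x + complex_of_real (Inf T) * w = xl V d j (fst p')) \<and>
     on_side V d j (fst p') \<and> snd p' = beta V d i j - snd p"

(* one step of Phi_lambda = R_lambda o Phi from side i to side j *)
definition bill_lam :: "(nat \<Rightarrow> complex) \<Rightarrow> nat \<Rightarrow> real \<Rightarrow> nat \<Rightarrow> nat \<Rightarrow> real \<times> real \<Rightarrow> real \<times> real \<Rightarrow> bool" where
  "bill_lam V d lam i j p p' \<longleftrightarrow> (\<exists>th'. bill V d i j p (fst p', th') \<and> snd p' = lam * th')"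

definition porbit :: "(nat \<Rightarrow> complex) \<Rightarrow> nat \<Rightarrow> real \<Rightarrow> nat \<Rightarrow> (nat \<Rightarrow> nat) \<Rightarrow> (nat \<Rightarrow> real \<times> real) \<Rightarrow> bool" where
  "porbit V d lam n it q \<longleftrightarrow>
     (\<forall>k<2*n. bill_lam V d lam (it k) (it (Suc k)) (q k) (q (Suc k))) \<and> q (2*n) = q 0"

definition lam_plus_stable :: "(nat \<Rightarrow> complex) \<Rightarrow> nat \<Rightarrow> nat \<Rightarrow> (nat \<Rightarrow> nat) \<Rightarrow> (nat \<Rightarrow> real \<times> real) \<Rightarrow> bool" where
  "lam_plus_stable V d n it q \<longleftrightarrow> porbit V d 1 n it q \<and>
     (\<exists>l :: nat \<Rightarrow> real. \<exists>Q :: nat \<Rightarrow> nat \<Rightarrow> real \<times> real.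
        (\<forall>m. 0 < l m \<and> l (Suc m) < l m) \<and> l \<longlonglongrightarrow> 1 \<and>
        (\<forall>m. porbit V d (l m) n it (Q m)) \<and>
        (\<forall>k\<le>2*n. (\<lambda>m. Q m k) \<longlonglongrightarrow> q k))"

definition lam_minus_stable :: "(nat \<Rightarrow> complex) \<Rightarrow> nat \<Rightarrow> nat \<Rightarrow> (nat \<Rightarrow> nat) \<Rightarrow> (nat \<Rightarrow> real \<times> real) \<Rightarrow> bool" where
  "lam_minus_stable V d n it q \<longleftrightarrow> porbit V d 1 n it q \<and>
     (\<exists>l :: nat \<Rightarrow> real. \<exists>Q :: nat \<Rightarrow> nat \<Rightarrow> real \<times> real.
        (\<forall>m. 0 < l m \<and> l m < l (Suc m)) \<and> l \<longlonglongrightarrow> 1 \<and>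
        (\<forall>m. porbit V d (l m) n it (Q m)) \<and>
        (\<forall>k\<le>2*n. (\<lambda>m. Q m k) \<longlonglongrightarrow> q k))"

(* base I_C of the cylinder: foot points s such that (s, th0) is a periodic point of Phi
   with the itinerary of C *)
definition base :: "(nat \<Rightarrow> complex) \<Rightarrow> nat \<Rightarrow> nat \<Rightarrow> (nat \<Rightarrow> nat) \<Rightarrow> real \<Rightarrow> real set" where
  "base V d n it th0 = {s. \<exists>q. porbit V d 1 n it q \<and> q 0 = (s, th0)}"

definition cyl_lam_stable :: "(nat \<Rightarrow> complex) \<Rightarrow> nat \<Rightarrow> nat \<Rightarrow> (nat \<Rightarrow> nat) \<Rightarrow> real \<Rightarrow> bool" where
  "cyl_lam_stable V d n it th0 \<longleftrightarrow>
     (\<exists>q s. s \<in> base V d n it th0 \<and> q 0 = (s, th0) \<and> lam_plus_stable V d n it q) \<and>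
     (\<exists>q s. s \<in> base V d n it th0 \<and> q 0 = (s, th0) \<and> lam_minus_stable V d n it q)"

fun thk :: "(nat \<Rightarrow> complex) \<Rightarrow> nat \<Rightarrow> (nat \<Rightarrow> nat) \<Rightarrow> real \<Rightarrow> nat \<Rightarrow> real" where
  "thk V d it th0 0 = th0"
| "thk V d it th0 (Suc k) = beta V d (it k) (it (Suc k)) - thk V d it th0 k"

(* Phi_{i,j} on lines: oriented length t(s,th) and new parameter s' *)
definition tlen :: "(nat \<Rightarrow> complex) \<Rightarrow> nat \<Rightarrow> nat \<Rightarrow> nat \<Rightarrow> real \<Rightarrow> real \<Rightarrow> real" where
  "tlen V d i j s \<theta> =
     Im (cnj (u V d j) * (V j - xl V d i s)) / Im (cnj (u V d j) * dir V d i \<theta>)"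

definition snew :: "(nat \<Rightarrow> complex) \<Rightarrow> nat \<Rightarrow> nat \<Rightarrow> nat \<Rightarrow> real \<Rightarrow> real \<Rightarrow> real" where
  "snew V d i j s \<theta> =
     S0 V d j + Re (cnj (u V d j) *
        (xl V d i s + complex_of_real (tlen V d i j s \<theta>) * dir V d i \<theta> - V j))"

fun sk :: "(nat \<Rightarrow> complex) \<Rightarrow> nat \<Rightarrow> (nat \<Rightarrow> nat) \<Rightarrow> real \<Rightarrow> real \<Rightarrow> nat \<Rightarrow> real" where
  "sk V d it th0 s 0 = s"
| "sk V d it th0 s (Suc k) =
     snew V d (it k) (it (Suc k)) (sk V d it th0 s k) (thk V d it th0 k)"

definition Lk :: "(nat \<Rightarrow> complex) \<Rightarrow> nat \<Rightarrow> (nat \<Rightarrow> nat) \<Rightarrow> real \<Rightarrow> real \<Rightarrow> nat \<Rightarrow> real" where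
  "Lk V d it th0 s k =
     (\<Sum>m<k. tlen V d (it m) (it (Suc m)) (sk V d it th0 s m) (thk V d it th0 m))"

definition Omega0 :: "(nat \<Rightarrow> complex) \<Rightarrow> nat \<Rightarrow> nat \<Rightarrow> (nat \<Rightarrow> nat) \<Rightarrow> real" where
  "Omega0 V d n it = (1 / (4 * real n)) *
     (\<Sum>k<2*n. (-1) ^ (k+1) * real k * real (2*n - k) * beta V d (it k) (it (Suc k)))"

end

theory Submission
  imports Defs
begin


lemma cis_unit_eq: "cmod z = 1 \<Longrightarrow> cis (Arg z) = z"
  by (metis cis_Arg sgn_eq zero_neq_one norm_zero complex_of_real_code divide_complex_def
      mult.right_neutral of_real_1 inverse_1)

locale pg =
  fixes V :: "nat \<Rightarrow> complex" and d :: nat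
  assumes poly: "simple_ccw_polygon V d"
begin

lemma d3: "3 \<le> d" using poly by (simp add: simple_ccw_polygon_def)
lemma injV: "inj_on V {..<d}" using poly by (simp add: simple_ccw_polygon_def)
lemma sides_meet: "i<d \<Longrightarrow> j<d \<Longrightarrow> i\<noteq>j \<Longrightarrow>
   side V d i \<inter> side V d j \<subseteq> {V i, V (nxt d i)} \<inter> {V j, V (nxt d j)}"
  using poly by (simp add: simple_ccw_polygon_def)

lemma nxt_lt: "i<d \<Longrightarrow> nxt d i < d"
  using d3 by (simp add: nxt_def)

lemma nxt_ne: "i<d \<Longrightarrow> nxt d i \<noteq> i"
proof
  assume "i<d" "nxt d i = i"
  then show False using d3
  proof (cases "Suc i < d")
    case False
    then have "Suc i = d" using \<open>i<d\<close> by simp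
    then show False using \<open>nxt d i = i\<close> d3 by (simp add: nxt_def)
  qed (auto simp: nxt_def)
qed

lemma vne: "i<d \<Longrightarrow> V (nxt d i) \<noteq> V i"
  using injV nxt_lt nxt_ne by (meson inj_on_contraD lessThan_iff)

definition len :: "nat \<Rightarrow> real" where "len i = cmod (V (nxt d i) - V i)"

lemma len_pos: "i<d \<Longrightarrow> len i > 0"
  using vne by (simp add: len_def)

lemma S0_Suc: "S0 V d (Suc i) = S0 V d i + len i"
  by (simp add: S0_def len_def)

lemma u_norm: "i<d \<Longrightarrow> cmod (u V d i) = 1"
  using vne by (simp add: u_def norm_divide)

lemma cnj_u: "i<d \<Longrightarrow> cnj (u V d i) * u V d i = 1"
  using u_norm by (metis complex_norm_square mult.commute of_real_1 power_one complex_mult_cnj)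

lemma u_ne0: "i<d \<Longrightarrow> u V d i \<noteq> 0"
  using u_norm by fastforce

lemma cis_beta: "i<d \<Longrightarrow> j<d \<Longrightarrow> cis (beta V d i j) = - u V d i * cnj (u V d j)"
  unfolding beta_def
  by (rule cis_unit_eq) (simp add: norm_mult u_norm)

lemma cnj_uj_ui: "i<d \<Longrightarrow> j<d \<Longrightarrow> cnj (u V d j) * u V d i = - cis (beta V d i j)"
  using cis_beta by (simp add: mult.commute)

lemma xl_start: "xl V d i (S0 V d i) = V i"
  by (simp add: xl_def)

lemma xl_end: "i<d \<Longrightarrow> xl V d i (S0 V d (Suc i)) = V (nxt d i)"
  using len_pos[of i]
  by (simp add: xl_def S0_Suc u_def len_def[symmetric])

lemma xl_inj: assumes "i<d" "xl V d i s = xl V d i t" shows "s = t"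
proof -
  have "complex_of_real (s - S0 V d i) * u V d i = complex_of_real (t - S0 V d i) * u V d i"
    using assms(2) by (simp add: xl_def)
  then have "complex_of_real (s - S0 V d i) = complex_of_real (t - S0 V d i)"
    using u_ne0[OF assms(1)] by simp
  then show ?thesis by simp
qed

lemma xl_aff: "xl V d i ((1-w)*p + w*q) = (1-w) * xl V d i p + w * xl V d i q"
  by (simp add: xl_def algebra_simps)

lemma side_param:
  assumes "i<d" "z \<in> side V d i"
  shows "\<exists>s. S0 V d i \<le> s \<and> s \<le> S0 V d (Suc i) \<and> z = xl V d i s"
proof -
  obtain c where c: "0 \<le> c" "c \<le> 1" "z = (1 - c) *\<^sub>R V i + c *\<^sub>R V (nxt d i)"
    using assms(2) unfolding side_def closed_segment_def by auto
  have lp: "len i > 0" using len_pos assms(1) .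
  have "xl V d i (S0 V d i + c * len i) = z"
    using lp by (simp add: c(3) xl_def u_def len_def[symmetric] scaleR_conv_of_real field_simps)
  then show ?thesis using c lp
    by (intro exI[of _ "S0 V d i + c * len i"]) (simp add: S0_Suc mult_left_le)
qed

lemma param_side:
  assumes "i<d" "S0 V d i \<le> s" "s \<le> S0 V d (Suc i)"
  shows "xl V d i s \<in> side V d i"
proof -
  have lp: "len i > 0" using len_pos assms(1) .
  define c where "c = (s - S0 V d i) / len i"
  have c: "0 \<le> c" "c \<le> 1" using assms lp by (auto simp: c_def S0_Suc field_simps)
  have "xl V d i s = (1 - c) *\<^sub>R V i + c *\<^sub>R V (nxt d i)"
    using lp by (simp add: c_def xl_def u_def len_def[symmetric] scaleR_conv_of_real algebra_simps
        diff_divide_distrib add_divide_distrib)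
  then show ?thesis using c unfolding side_def closed_segment_def by auto
qed

lemma on_side_in: "on_side V d i s \<Longrightarrow> xl V d i s \<in> side V d i"
  by (auto simp: on_side_def intro!: param_side)

lemma on_side_not_vertex:
  assumes "on_side V d i s"
  shows "xl V d i s \<noteq> V i \<and> xl V d i s \<noteq> V (nxt d i)"
proof -
  have i: "i<d" using assms by (simp add: on_side_def)
  show ?thesis
  proof
    show "xl V d i s \<noteq> V i"
      using xl_inj[OF i, of s "S0 V d i"] xl_start assms by (auto simp: on_side_def)
    show "xl V d i s \<noteq> V (nxt d i)"
      using xl_inj[OF i, of s "S0 V d (Suc i)"] xl_end[OF i] assms by (auto simp: on_side_def)
  qed
qed

lemma relint_not_other:
  assumes "on_side V d i s" "r<d" "r \<noteq> i"
  shows "xl V d i s \<notin> side V d r"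
proof
  assume "xl V d i s \<in> side V d r"
  moreover have "xl V d i s \<in> side V d i" using on_side_in assms(1) .
  moreover have "i<d" using assms(1) by (simp add: on_side_def)
  ultimately have "xl V d i s \<in> {V i, V (nxt d i)}"
    using sides_meet[of i r] assms by blast
  then show False using on_side_not_vertex[OF assms(1)] by blast
qed

lemma side_sub_bdry: "i<d \<Longrightarrow> side V d i \<subseteq> bdry V d"
  by (auto simp: bdry_def)

end


context pg begin

abbreviation "uu \<equiv> u V d"
abbreviation "bt i j \<equiv> beta V d i j"
definition Ac :: "nat \<Rightarrow> nat \<Rightarrow> real" where "Ac i j = Re (cnj (uu j) * (V i - V j))"
definition Bc :: "nat \<Rightarrow> nat \<Rightarrow> real" where "Bc i j = Im (cnj (uu j) * (V i - V j))"

lemma cuj_x: "i<d \<Longrightarrow> j<d \<Longrightarrow>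
  cnj (uu j) * (xl V d i s - V j) = cnj (uu j) * (V i - V j) - of_real (s - S0 V d i) * cis (bt i j)"
proof -
  assume ij: "i<d" "j<d"
  have "cnj (uu j) * (xl V d i s - V j) = cnj (uu j) * (V i - V j) + of_real (s - S0 V d i) * (cnj (uu j) * uu i)"
    by (simp add: xl_def algebra_simps)
  also have "\<dots> = cnj (uu j) * (V i - V j) - of_real (s - S0 V d i) * cis (bt i j)"
    using cnj_uj_ui[OF ij] by simp
  finally show ?thesis .
qed

lemma cuj_dir: "i<d \<Longrightarrow> j<d \<Longrightarrow> cnj (uu j) * dir V d i th = - \<i> * cis (bt i j - th)"
proof -
  assume ij: "i<d" "j<d"
  have "cnj (uu j) * dir V d i th = \<i> * (cnj (uu j) * uu i) * cis (- th)"
    by (simp add: dir_def algebra_simps)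
  also have "\<dots> = - \<i> * (cis (bt i j) * cis (- th))" using cnj_uj_ui[OF ij] by simp
  also have "\<dots> = - \<i> * cis (bt i j - th)" by (simp add: cis_mult)
  finally show ?thesis .
qed

lemma Im_cuj_dir: "i<d \<Longrightarrow> j<d \<Longrightarrow> Im (cnj (uu j) * dir V d i th) = - cos (bt i j - th)"
  using cuj_dir by (simp add: cis.ctr)
lemma Re_cuj_dir: "i<d \<Longrightarrow> j<d \<Longrightarrow> Re (cnj (uu j) * dir V d i th) = sin (bt i j - th)"
  using cuj_dir by (simp add: cis.ctr)

lemma Im_cuj_x: "i<d \<Longrightarrow> j<d \<Longrightarrow>
   Im (cnj (uu j) * (xl V d i s - V j)) = Bc i j - (s - S0 V d i) * sin (bt i j)"
  using cuj_x by (simp add: Bc_def cis.ctr)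
lemma Re_cuj_x: "i<d \<Longrightarrow> j<d \<Longrightarrow>
   Re (cnj (uu j) * (xl V d i s - V j)) = Ac i j - (s - S0 V d i) * cos (bt i j)"
  using cuj_x by (simp add: Ac_def cis.ctr)

lemma tlen_closed: "i<d \<Longrightarrow> j<d \<Longrightarrow>
  tlen V d i j s th = (Bc i j - (s - S0 V d i) * sin (bt i j)) / cos (bt i j - th)"
proof -
  assume ij: "i<d" "j<d"
  have e: "cnj (uu j) * (V j - xl V d i s) = - (cnj (uu j) * (xl V d i s - V j))"
    by (simp add: algebra_simps)
  have "Im (cnj (uu j) * (V j - xl V d i s)) = - (Bc i j - (s - S0 V d i) * sin (bt i j))"
    unfolding e uminus_complex.sel Im_cuj_x[OF ij] ..
  then show ?thesis unfolding tlen_def Im_cuj_dir[OF ij] by (simp only: minus_divide_divide)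

qed

lemma snew_closed: "i<d \<Longrightarrow> j<d \<Longrightarrow>
  snew V d i j s th = S0 V d j + (Ac i j - (s - S0 V d i) * cos (bt i j))
       + tlen V d i j s th * sin (bt i j - th)"
proof -
  assume ij: "i<d" "j<d"
  have "cnj (uu j) * (xl V d i s + of_real (tlen V d i j s th) * dir V d i th - V j)
      = cnj (uu j) * (xl V d i s - V j) + of_real (tlen V d i j s th) * (cnj (uu j) * dir V d i th)"
    by (simp add: algebra_simps)
  then show ?thesis using Re_cuj_x[OF ij] Re_cuj_dir[OF ij]
    by (simp add: snew_def)
qed

lemma Im_add_ofr: "Im (A + of_real t * B) = Im A + t * Im B" by simp
lemma Re_add_ofr: "Re (A + of_real t * B) = Re A + t * Re B" by simp

lemma line_Im: "i<d \<Longrightarrow> j<d \<Longrightarrow>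
  Im (cnj (uu j) * (xl V d i s + of_real t * dir V d i th - V j))
   = (Bc i j - (s - S0 V d i) * sin (bt i j)) - t * cos (bt i j - th)"
proof -
  assume ij: "i<d" "j<d"
  have eq: "cnj (uu j) * (xl V d i s + of_real t * dir V d i th - V j)
      = cnj (uu j) * (xl V d i s - V j) + of_real t * (cnj (uu j) * dir V d i th)"
    by (simp add: algebra_simps)
  show ?thesis unfolding eq Im_add_ofr Im_cuj_x[OF ij] Im_cuj_dir[OF ij] by simp
qed

lemma xl_line: "j<d \<Longrightarrow> Im (cnj (uu j) * (xl V d j s - V j)) = 0"
proof -
  assume j: "j<d"
  have "cnj (uu j) * (xl V d j s - V j) = of_real (s - S0 V d j) * (cnj (uu j) * uu j)"
    by (simp add: xl_def mult.left_commute)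
  then show ?thesis using cnj_u[OF j] by simp
qed

lemma hit:
  assumes ij: "i<d" "j<d" and c: "cos (bt i j - th) \<noteq> 0"
  shows "xl V d i s + of_real (tlen V d i j s th) * dir V d i th = xl V d j (snew V d i j s th)"
proof -
  define z where "z = xl V d i s + of_real (tlen V d i j s th) * dir V d i th - V j"
  define r where "r = Re (cnj (uu j) * z)"
  have im0: "Im (cnj (uu j) * z) = 0"
    unfolding z_def line_Im[OF ij] tlen_closed[OF ij] using c by simp
  then have w: "cnj (uu j) * z = of_real r"
    by (simp add: complex_eq_iff r_def)
  have "z = (uu j * cnj (uu j)) * z" using cnj_u[OF ij(2)] by (simp add: mult.commute)
  also have "\<dots> = uu j * of_real r" unfolding mult.assoc w ..
  finally have zr: "z = of_real r * uu j" by (simp add: mult.commute)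
  have sr: "snew V d i j s th - S0 V d j = r"
    by (simp add: snew_def r_def z_def)
  have "xl V d j (snew V d i j s th) = V j + of_real r * uu j"
    unfolding xl_def sr ..
  also have "\<dots> = V j + z" using zr by simp
  finally show ?thesis by (simp add: z_def)
qed

lemma hit_unique:
  assumes ij: "i<d" "j<d" and c: "cos (bt i j - th) \<noteq> 0"
    and h: "xl V d i s + of_real t * dir V d i th = xl V d j s'"
  shows "t = tlen V d i j s th \<and> s' = snew V d i j s th"
proof -
  have "Im (cnj (uu j) * (xl V d i s + of_real t * dir V d i th - V j)) = 0"
    unfolding h using xl_line[OF ij(2)] .
  then have "(Bc i j - (s - S0 V d i) * sin (bt i j)) - t * cos (bt i j - th) = 0"
    unfolding line_Im[OF ij] .
  then have t: "t = tlen V d i j s th"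
    unfolding tlen_closed[OF ij] using c by (simp add: eq_divide_eq)
  then have "xl V d j s' = xl V d j (snew V d i j s th)" using hit[OF ij c] h by simp
  then show ?thesis using t xl_inj[OF ij(2)] by blast
qed

definition Tset :: "nat \<Rightarrow> real \<Rightarrow> real \<Rightarrow> real set" where
  "Tset i s th = {t. 0 < t \<and> xl V d i s + of_real t * dir V d i th \<in> bdry V d}"

lemma bill_iff: "bill V d i j p p' \<longleftrightarrow>
     on_side V d i (fst p) \<and> \<bar>snd p\<bar> < pi / 2 \<and>
     Inf (Tset i (fst p) (snd p)) \<in> Tset i (fst p) (snd p) \<and>
     xl V d i (fst p) + of_real (Inf (Tset i (fst p) (snd p))) * dir V d i (snd p) = xl V d j (fst p') \<and>
     on_side V d j (fst p') \<and> snd p' = bt i j - snd p"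
  by (simp add: bill_def Tset_def Let_def)

lemma bill_imp:
  assumes b: "bill V d i j (s, th) (s', th')" and c: "cos th' \<noteq> 0"
  shows "i<d \<and> j<d \<and> th' = bt i j - th \<and> \<bar>th\<bar> < pi/2 \<and> on_side V d i s \<and> on_side V d j s'
     \<and> s' = snew V d i j s th \<and> tlen V d i j s th > 0
     \<and> (\<forall>t. 0 < t \<longrightarrow> t < tlen V d i j s th \<longrightarrow> xl V d i s + of_real t * dir V d i th \<notin> bdry V d)"
proof -
  have B: "on_side V d i s" "\<bar>th\<bar> < pi / 2" "Inf (Tset i s th) \<in> Tset i s th"
    "xl V d i s + of_real (Inf (Tset i s th)) * dir V d i th = xl V d j s'"
    "on_side V d j s'" "th' = bt i j - th"
    using b by (auto simp: bill_iff)
  have ij: "i<d" "j<d" using B by (auto simp: on_side_def)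
  have c': "cos (bt i j - th) \<noteq> 0" using c B by simp
  note hu = hit_unique[OF ij c' B(4)]
  have pos: "Inf (Tset i s th) > 0" using B(3) by (simp add: Tset_def)
  have low: "\<forall>t. 0 < t \<longrightarrow> t < tlen V d i j s th \<longrightarrow> xl V d i s + of_real t * dir V d i th \<notin> bdry V d"
  proof (intro allI impI)
    fix t assume t: "0 < t" "t < tlen V d i j s th"
    show "xl V d i s + of_real t * dir V d i th \<notin> bdry V d"
    proof
      assume "xl V d i s + of_real t * dir V d i th \<in> bdry V d"
      then have "t \<in> Tset i s th" using t by (simp add: Tset_def)
      moreover have "bdd_below (Tset i s th)" by (rule bdd_belowI[of _ 0]) (simp add: Tset_def)
      ultimately have "Inf (Tset i s th) \<le> t" by (rule cInf_lower)
      then show False using t hu by simp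
    qed
  qed
  show ?thesis using B ij hu pos low by simp
qed

end


lemma aff_between:
  fixes a b x p q :: real
  assumes "min a b \<le> x" "x \<le> max a b"
  shows "min (p + q*a) (p + q*b) \<le> p + q*x \<and> p + q*x \<le> max (p + q*a) (p + q*b)"
proof (cases "0 \<le> q")
  case True
  then have "q*(min a b) \<le> q*x" "q*x \<le> q*(max a b)" using assms by (auto intro: mult_left_mono)
  then show ?thesis by (auto simp: min_def max_def split: if_splits)
next
  case False
  then have "q*x \<le> q*(min a b)" "q*(max a b) \<le> q*x" using assms by (auto intro: mult_left_mono_neg)
  then show ?thesis by (auto simp: min_def max_def split: if_splits)
qed

lemma aff_between_strict:
  fixes a b x p q :: real
  assumes "min a b < x" "x < max a b" "q \<noteq> 0"
  shows "min (p + q*a) (p + q*b) < p + q*x \<and> p + q*x < max (p + q*a) (p + q*b)"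
proof (cases "0 < q")
  case True
  then have "q*(min a b) < q*x" "q*x < q*(max a b)" using assms by (auto intro: mult_strict_left_mono)
  then show ?thesis by (auto simp: min_def max_def split: if_splits)
next
  case False
  then have "q < 0" using assms by simp
  then have "q*x < q*(min a b)" "q*(max a b) < q*x" using assms by (auto intro: mult_strict_left_mono_neg)
  then show ?thesis by (auto simp: min_def max_def split: if_splits)
qed

lemma aff_between_rev:
  fixes a b x p q :: real
  assumes "min (p + q*a) (p + q*b) < p + q*x" "p + q*x < max (p + q*a) (p + q*b)"
  shows "min a b < x \<and> x < max a b"
proof -
  have q: "q \<noteq> 0" using assms by auto
  show ?thesis
  proof (cases "0 < q")
    case True
    then show ?thesis using assms by (auto simp: min_def max_def mult_less_cancel_left split: if_splits)
  next
    case False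
    then have "q < 0" using q by simp
    then show ?thesis using assms by (auto simp: min_def max_def mult_less_cancel_left split: if_splits)
  qed
qed

context pg begin

definition tcoord :: "nat \<Rightarrow> real \<Rightarrow> complex \<Rightarrow> real" where
  "tcoord i th z = Im (cnj (uu i) * (z - V i)) / cos th"
definition scoord :: "nat \<Rightarrow> real \<Rightarrow> complex \<Rightarrow> real" where
  "scoord i th z = S0 V d i + Re (cnj (uu i) * (z - V i)) - tcoord i th z * sin th"

lemma cui_pt: "i<d \<Longrightarrow> cnj (uu i) * (xl V d i s + of_real t * dir V d i th - V i)
   = of_real (s - S0 V d i) + of_real t * (\<i> * cis (- th))"
proof -
  assume i: "i<d"
  have "cnj (uu i) * (xl V d i s + of_real t * dir V d i th - V i)
     = of_real (s - S0 V d i) * (cnj (uu i) * uu i) + of_real t * \<i> * (cnj (uu i) * uu i) * cis (- th)"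
    by (simp add: xl_def dir_def algebra_simps)
  then show ?thesis using cnj_u[OF i] by simp
qed

lemma coords:
  assumes i: "i<d" and c: "cos th \<noteq> 0"
  shows "tcoord i th (xl V d i s + of_real t * dir V d i th) = t
       \<and> scoord i th (xl V d i s + of_real t * dir V d i th) = s"
proof -
  have t: "tcoord i th (xl V d i s + of_real t * dir V d i th) = t"
    unfolding tcoord_def cui_pt[OF i] using c by (simp add: cis.ctr)
  show ?thesis using t unfolding scoord_def cui_pt[OF i] by (simp add: cis.ctr)
qed

lemma coords_inv:
  assumes i: "i<d" and c: "cos th \<noteq> 0"
  shows "z = xl V d i (scoord i th z) + of_real (tcoord i th z) * dir V d i th"
proof -
  define w where "w = xl V d i (scoord i th z) + of_real (tcoord i th z) * dir V d i th"
  have "cnj (uu i) * (w - V i) = cnj (uu i) * (z - V i)"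
    unfolding w_def cui_pt[OF i] using c
    by (simp add: complex_eq_iff cis.ctr scoord_def tcoord_def)
  then have "w - V i = z - V i" using u_ne0[OF i] by simp
  then show ?thesis by (simp add: w_def)
qed

lemma cont_tcoord: "continuous_on UNIV (tcoord i th)"
  unfolding tcoord_def divide_inverse by (intro continuous_intros)
lemma cont_scoord: "continuous_on UNIV (scoord i th)"
  unfolding scoord_def tcoord_def divide_inverse by (intro continuous_intros)

lemma tlen_aff: "i<d \<Longrightarrow> j<d \<Longrightarrow> \<exists>p q. \<forall>s. tlen V d i j s th = p + q * s"
proof -
  assume ij: "i<d" "j<d"
  have "\<forall>s. tlen V d i j s th = (Bc i j + S0 V d i * sin (bt i j)) / cos (bt i j - th)
      + (- sin (bt i j) / cos (bt i j - th)) * s"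
  proof
    fix s
    show "tlen V d i j s th = (Bc i j + S0 V d i * sin (bt i j)) / cos (bt i j - th)
      + (- sin (bt i j) / cos (bt i j - th)) * s"
      unfolding tlen_closed[OF ij]
      by (cases "cos (bt i j - th) = 0") (simp_all add: field_simps)
  qed
  then show ?thesis by blast
qed

lemma snew_aff: "i<d \<Longrightarrow> j<d \<Longrightarrow> \<exists>p q. \<forall>s. snew V d i j s th = p + q * s"
proof -
  assume ij: "i<d" "j<d"
  obtain p q where pq: "\<forall>s. tlen V d i j s th = p + q * s" using tlen_aff[OF ij] by blast
  have "\<forall>s. snew V d i j s th = (S0 V d j + Ac i j + S0 V d i * cos (bt i j) + p * sin (bt i j - th))
      + (- cos (bt i j) + q * sin (bt i j - th)) * s"
    unfolding snew_closed[OF ij] using pq by (simp add: algebra_simps)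
  then show ?thesis by blast
qed

lemma cont_tlen_scoord: "i<d \<Longrightarrow> j<d \<Longrightarrow> continuous_on UNIV (\<lambda>z. tlen V d i j (scoord i th z) th)"
proof -
  assume ij: "i<d" "j<d"
  obtain p q where pq: "\<forall>s. tlen V d i j s th = p + q * s" using tlen_aff[OF ij] by blast
  have e: "(\<lambda>z. tlen V d i j (scoord i th z) th) = (\<lambda>z. p + q * scoord i th z)" using pq by auto
  show ?thesis unfolding e using cont_scoord by (intro continuous_intros)
qed

lemma chain:
  assumes i: "i<d" and m: "m<d" "m \<noteq> i" "m \<noteq> j"
  shows "\<exists>C. connected C \<and> side V d m \<subseteq> C \<and> (\<forall>z\<in>C. \<exists>r<d. r \<noteq> i \<and> r \<noteq> j \<and> z \<in> side V d r)
            \<and> (\<exists>v\<in>C. v \<in> side V d i \<union> side V d j)"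
proof -
  define rr where "rr k = (m + k) mod d" for k
  define CC where "CC K = (\<Union>k<K. side V d (rr k))" for K
  have rr_lt: "rr k < d" for k using d3 by (simp add: rr_def)
  have rr_nxt: "nxt d (rr k) = rr (Suc k)" for k by (simp add: rr_def nxt_def mod_Suc_eq)
  have Vin: "V (rr (Suc k)) \<in> side V d (rr k)" for k
    using rr_nxt[of k] by (simp add: side_def)
  have A: "connected (CC (Suc K)) \<and> V (rr (Suc K)) \<in> CC (Suc K)" for K
  proof (induction K)
    case 0
    then show ?case using Vin[of 0] by (simp add: CC_def lessThan_Suc side_def connected_segment)
  next
    case (Suc K)
    have e: "CC (Suc (Suc K)) = CC (Suc K) \<union> side V d (rr (Suc K))"
      by (simp add: CC_def lessThan_Suc Un_commute)
    have "V (rr (Suc K)) \<in> side V d (rr (Suc K))" by (simp add: side_def)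
    then have "connected (CC (Suc (Suc K)))" unfolding e using Suc.IH
      by (intro connected_Un) (auto simp: side_def)
    moreover have "V (rr (Suc (Suc K))) \<in> CC (Suc (Suc K))" unfolding e using Vin[of "Suc K"] by simp
    ultimately show ?case by simp
  qed
  define P where "P k \<longleftrightarrow> rr k = i \<or> rr k = j" for k
  have ex: "P (i + d - m)" using m i by (simp add: P_def rr_def)
  define K where "K = (LEAST k. P k)"
  have PK: "P K" unfolding K_def using ex by (rule LeastI)
  have notP: "k < K \<Longrightarrow> \<not> P k" for k unfolding K_def by (rule not_less_Least)
  have K0: "K \<noteq> 0"
  proof
    assume "K = 0"
    then show False using PK m by (simp add: P_def rr_def)
  qed
  then obtain K' where K': "K = Suc K'" by (cases K) auto
  show ?thesis
  proof (intro exI conjI)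
    show "connected (CC K)" using A[of K'] K' by simp
    have "rr 0 = m" using m by (simp add: rr_def)
    moreover have "0 \<in> {..<K}" using K0 by simp
    ultimately show "side V d m \<subseteq> CC K" unfolding CC_def by blast
    show "\<forall>z\<in>CC K. \<exists>r<d. r \<noteq> i \<and> r \<noteq> j \<and> z \<in> side V d r"
      using notP rr_lt by (auto simp: CC_def P_def)
    show "\<exists>v\<in>CC K. v \<in> side V d i \<union> side V d j"
      using A[of K'] K' PK by (intro bexI[of _ "V (rr K)"]) (auto simp: P_def side_def)
  qed
qed

end


lemma cos_pos_abs: "\<bar>x\<bar> < pi/2 \<Longrightarrow> cos x > 0"
proof -
  assume a: "\<bar>x\<bar> < pi/2"
  have "-(pi/2) < x" "x < pi/2" using a by (auto simp: abs_less_iff)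
  then show ?thesis by (rule cos_gt_zero_pi)
qed

context pg begin

lemma bill_facts:
  assumes b: "bill V d i j (s, th) (s', bt i j - th)" and cb: "\<bar>bt i j - th\<bar> < pi/2"
  shows "i<d \<and> j<d \<and> \<bar>th\<bar> < pi/2 \<and> on_side V d i s \<and> on_side V d j s'
     \<and> s' = snew V d i j s th \<and> tlen V d i j s th > 0
     \<and> (\<forall>t. 0 < t \<longrightarrow> t < tlen V d i j s th \<longrightarrow> xl V d i s + of_real t * dir V d i th \<notin> bdry V d)"
proof -
  have "cos (bt i j - th) > 0" using cb by (rule cos_pos_abs)
  then show ?thesis using bill_imp[OF b] by auto
qed

lemma on_side_between:
  assumes "on_side V d i a" "on_side V d i b" "min a b \<le> x" "x \<le> max a b"
  shows "on_side V d i x"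
  using assms by (auto simp: on_side_def min_def max_def split: if_splits)

lemma core:
  assumes ij: "i<d" "j<d"
    and ba: "bill V d i j (sa, th) (sa', bt i j - th)"
    and bb: "bill V d i j (sb, th) (sb', bt i j - th)"
    and cb: "\<bar>bt i j - th\<bar> < pi/2"
    and sg: "min sa sb < sg" "sg < max sa sb"
    and t: "0 < t" "t < tlen V d i j sg th"
  shows "xl V d i sg + of_real t * dir V d i th \<notin> bdry V d"
proof
  assume zb: "xl V d i sg + of_real t * dir V d i th \<in> bdry V d"
  have ccb: "cos (bt i j - th) \<noteq> 0" using cos_pos_abs[OF cb] by simp
  note A = bill_facts[OF ba cb]
  note B = bill_facts[OF bb cb]
  have onA: "on_side V d i sa" "on_side V d j sa'" "sa' = snew V d i j sa th" using A by blast+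
  have onB: "on_side V d i sb" "on_side V d j sb'" "sb' = snew V d i j sb th" using B by blast+
  have chA: "\<And>t. 0 < t \<Longrightarrow> t < tlen V d i j sa th \<Longrightarrow> xl V d i sa + of_real t * dir V d i th \<notin> bdry V d"
    using A by blast
  have chB: "\<And>t. 0 < t \<Longrightarrow> t < tlen V d i j sb th \<Longrightarrow> xl V d i sb + of_real t * dir V d i th \<notin> bdry V d"
    using B by blast
  have cth: "cos th \<noteq> 0" using A cos_pos_abs by force
  define l where "l s = tlen V d i j s th" for s
  define U where "U = {z. min sa sb < scoord i th z \<and> scoord i th z < max sa sb \<and> 0 < tcoord i th z
      \<and> tcoord i th z < l (scoord i th z)}"
  define W where "W = {z. scoord i th z < min sa sb \<or> max sa sb < scoord i th z \<or> tcoord i th z < 0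
      \<or> l (scoord i th z) < tcoord i th z}"
  have cl: "continuous_on UNIV (\<lambda>z. l (scoord i th z))" unfolding l_def using cont_tlen_scoord[OF ij] .
  have oU: "open U" unfolding U_def
    by (intro open_Collect_conj open_Collect_less cont_scoord cont_tcoord cl continuous_on_const)
  have oW: "open W" unfolding W_def
    by (intro open_Collect_disj open_Collect_less cont_scoord cont_tcoord cl continuous_on_const)
  have UW: "U \<inter> W = {}" by (auto simp: U_def W_def)
  note cP = coords[OF ij(1) cth]
  have z0U: "xl V d i sg + of_real t * dir V d i th \<in> U" using cP sg t by (simp add: U_def l_def)
  have notU_i: "z \<notin> U" if zs: "z \<in> side V d i" for z
  proof -
    obtain s0 where "z = xl V d i s0" using side_param[OF ij(1) zs] by blast
    then have "z = xl V d i s0 + of_real 0 * dir V d i th" by simp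
    then have "tcoord i th z = 0" using cP[of s0 0] by metis
    then show ?thesis by (simp add: U_def)
  qed
  have notU_j: "z \<notin> U" if zs: "z \<in> side V d j" for z
  proof -
    obtain s0 where s0: "z = xl V d j s0" using side_param[OF ij(2) zs] by blast
    have "xl V d i (scoord i th z) + of_real (tcoord i th z) * dir V d i th = xl V d j s0"
      using coords_inv[OF ij(1) cth, of z] s0 by simp
    then have "tcoord i th z = l (scoord i th z)" using hit_unique[OF ij ccb] by (simp add: l_def)
    then show ?thesis by (simp add: U_def)
  qed
  obtain p q where pq: "\<forall>s. snew V d i j s th = p + q * s" using snew_aff[OF ij] by blast
  have sides: "side V d r \<subseteq> U \<union> W" if r: "r<d" "r\<noteq>i" "r\<noteq>j" for r
  proof
    fix z assume z: "z \<in> side V d r"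
    show "z \<in> U \<union> W"
    proof (rule ccontr)
      assume nz: "z \<notin> U \<union> W"
      define \<sigma> where "\<sigma> = scoord i th z"
      define \<tau> where "\<tau> = tcoord i th z"
      have zeq: "z = xl V d i \<sigma> + of_real \<tau> * dir V d i th"
        unfolding \<sigma>_def \<tau>_def by (rule coords_inv[OF ij(1) cth])
      have zU: "z \<in> U \<longleftrightarrow> (min sa sb < \<sigma> \<and> \<sigma> < max sa sb \<and> 0 < \<tau> \<and> \<tau> < l \<sigma>)"
        by (simp add: U_def \<sigma>_def \<tau>_def)
      have zW: "z \<in> W \<longleftrightarrow> (\<sigma> < min sa sb \<or> max sa sb < \<sigma> \<or> \<tau> < 0 \<or> l \<sigma> < \<tau>)"
        by (simp add: W_def \<sigma>_def \<tau>_def)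
      have bnd: "min sa sb \<le> \<sigma>" "\<sigma> \<le> max sa sb" "0 \<le> \<tau>" "\<tau> \<le> l \<sigma>"
      proof -
        have "z \<notin> W" using nz by simp
        then have "\<not> (\<sigma> < min sa sb \<or> max sa sb < \<sigma> \<or> \<tau> < 0 \<or> l \<sigma> < \<tau>)" unfolding zW .
        then show "min sa sb \<le> \<sigma>" "\<sigma> \<le> max sa sb" "0 \<le> \<tau>" "\<tau> \<le> l \<sigma>" by linarith+
      qed
      have zbd: "z \<in> bdry V d" using z side_sub_bdry[OF r(1)] by blast
      have ons: "on_side V d i \<sigma>" using on_side_between[OF onA(1) onB(1) bnd(1) bnd(2)] .
      consider "\<tau> = 0" | "\<tau> = l \<sigma>" | "0 < \<tau>" "\<tau> < l \<sigma>" using bnd by linarith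
      then show False
      proof cases
        case 1
        then have "z = xl V d i \<sigma>" using zeq by simp
        then show False using relint_not_other[OF ons r(1) r(2)] z by simp
      next
        case 2
        then have "z = xl V d j (snew V d i j \<sigma> th)" using zeq hit[OF ij ccb] by (simp add: l_def)
        moreover have "on_side V d j (snew V d i j \<sigma> th)"
        proof -
          have e: "snew V d i j \<sigma> th = p + q * \<sigma>" "sa' = p + q * sa" "sb' = p + q * sb"
            using pq onA(3) onB(3) by simp_all
          have "min (p + q * sa) (p + q * sb) \<le> p + q * \<sigma> \<and> p + q * \<sigma> \<le> max (p + q * sa) (p + q * sb)"
            using aff_between bnd(1,2) by blast
          then show ?thesis unfolding e(1) using on_side_between[OF onA(2) onB(2)] e(2,3) by simp
        qed
        ultimately show False using relint_not_other[OF _ r(1) r(3)] z by blast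
      next
        case 3
        have "z \<notin> U" using nz by simp
        then have "\<not> (min sa sb < \<sigma> \<and> \<sigma> < max sa sb)" unfolding zU using 3 by simp
        then have "\<sigma> = sa \<or> \<sigma> = sb" using bnd(1,2) by (cases "sa \<le> sb") (auto simp: min_def max_def)
        then show False
        proof
          assume "\<sigma> = sa"
          then show False using chA[of \<tau>] 3 zeq zbd by (simp add: l_def)
        next
          assume "\<sigma> = sb"
          then show False using chB[of \<tau>] 3 zeq zbd by (simp add: l_def)
        qed
      qed
    qed
  qed
  obtain m where m: "m<d" "xl V d i sg + of_real t * dir V d i th \<in> side V d m"
    using zb by (auto simp: bdry_def)
  have mi: "m \<noteq> i" using notU_i z0U m by blast
  have mj: "m \<noteq> j" using notU_j z0U m by blast
  obtain C where C: "connected C" "side V d m \<subseteq> C" "\<forall>z\<in>C. \<exists>r<d. r \<noteq> i \<and> r \<noteq> j \<and> z \<in> side V d r"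
      "\<exists>v\<in>C. v \<in> side V d i \<union> side V d j"
    using chain[OF ij(1) m(1) mi mj] by blast
  have CUW: "C \<subseteq> U \<union> W" using C(3) sides by blast
  obtain v where v: "v \<in> C" "v \<in> side V d i \<union> side V d j" using C(4) by blast
  have "v \<notin> U" using v notU_i notU_j by blast
  then have vW: "v \<in> W" using v CUW by blast
  have UWC: "U \<inter> W \<inter> C = {}" using UW by blast
  have "U \<inter> C = {} \<or> W \<inter> C = {}"
    by (rule connectedD[OF C(1) oU oW UWC CUW])
  then show False using vW v z0U m C(2) by blast
qed

end


lemma conv_pos:
  fixes x y nu c :: real
  assumes "c < x" "c < y" "0 \<le> nu" "nu \<le> 1"
  shows "c < (1-nu) * x + nu * y"
proof -
  define e where "e = min (x - c) (y - c)"
  have e: "e > 0" "e \<le> x - c" "e \<le> y - c" using assms by (auto simp: e_def)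
  have "(1-nu) * e \<le> (1-nu) * (x-c)" "nu * e \<le> nu * (y-c)" using e assms by (auto intro: mult_left_mono)
  then have "(1-nu) * e + nu * e \<le> (1-nu) * x + nu * y - c" by (simp add: algebra_simps)
  moreover have "(1-nu) * e + nu * e = e" by (simp add: algebra_simps)
  ultimately show ?thesis using e by linarith
qed

lemma conv_between:
  fixes a b x y nu :: real
  assumes "min a b < x" "x < max a b" "min a b < y" "y < max a b" "0 \<le> nu" "nu \<le> 1"
  shows "min a b < (1-nu) * x + nu * y \<and> (1-nu) * x + nu * y < max a b"
proof
  show "min a b < (1-nu) * x + nu * y" using conv_pos assms by blast
  have "- max a b < (1-nu) * (-x) + nu * (-y)" using conv_pos[of "- max a b" "-x" "-y" nu] assms by simp
  then show "(1-nu) * x + nu * y < max a b" by (simp add: algebra_simps)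
qed

context pg begin

lemma chord:
  assumes ij: "i<d" "j<d"
    and ba: "bill V d i j (sa, th) (sa', bt i j - th)"
    and bb: "bill V d i j (sb, th) (sb', bt i j - th)"
    and cb: "\<bar>bt i j - th\<bar> < pi/2"
    and s: "min sa sb < s" "s < max sa sb"
    and th2: "\<bar>th2\<bar> < pi/2" and c2: "cos (bt i j - th2) \<noteq> 0"
    and T: "tlen V d i j s th2 > 0"
    and s2: "min sa' sb' < snew V d i j s th2" "snew V d i j s th2 < max sa' sb'"
  shows "bill V d i j (s, th2) (snew V d i j s th2, bt i j - th2)"
proof -
  have ccb: "cos (bt i j - th) \<noteq> 0" using cos_pos_abs[OF cb] by simp
  note A = bill_facts[OF ba cb]
  note B = bill_facts[OF bb cb]
  have onA: "on_side V d i sa" "on_side V d j sa'" "sa' = snew V d i j sa th" "tlen V d i j sa th > 0"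
    using A by blast+
  have onB: "on_side V d i sb" "on_side V d j sb'" "sb' = snew V d i j sb th" "tlen V d i j sb th > 0"
    using B by blast+
  have cth: "cos th \<noteq> 0" using A cos_pos_abs by force
  define s2' where "s2' = snew V d i j s th2"
  define T2 where "T2 = tlen V d i j s th2"
  have ons: "on_side V d i s" using on_side_between[OF onA(1) onB(1)] s by simp
  have ons2: "on_side V d j s2'" using on_side_between[OF onA(2) onB(2)] s2 by (simp add: s2'_def)
  have hit2: "xl V d i s + of_real T2 * dir V d i th2 = xl V d j s2'"
    unfolding T2_def s2'_def by (rule hit[OF ij c2])
  define \<sigma>2 where "\<sigma>2 = scoord i th (xl V d j s2')"
  define \<tau>2 where "\<tau>2 = tcoord i th (xl V d j s2')"
  have e2: "xl V d i \<sigma>2 + of_real \<tau>2 * dir V d i th = xl V d j s2'"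
    unfolding \<sigma>2_def \<tau>2_def using coords_inv[OF ij(1) cth] by metis
  have hu: "\<tau>2 = tlen V d i j \<sigma>2 th" "s2' = snew V d i j \<sigma>2 th"
    using hit_unique[OF ij ccb e2] by blast+
  obtain p q where pq: "\<forall>x. snew V d i j x th = p + q * x" using snew_aff[OF ij] by blast
  obtain p1 q1 where pq1: "\<forall>x. tlen V d i j x th = p1 + q1 * x" using tlen_aff[OF ij] by blast
  have sig2: "min sa sb < \<sigma>2 \<and> \<sigma>2 < max sa sb"
  proof (rule aff_between_rev[of p q])
    have e: "s2' = p + q * \<sigma>2" "sa' = p + q * sa" "sb' = p + q * sb"
      using pq hu(2) onA(3) onB(3) by simp_all
    show "min (p + q * sa) (p + q * sb) < p + q * \<sigma>2" using s2 e by (simp add: s2'_def)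
    show "p + q * \<sigma>2 < max (p + q * sa) (p + q * sb)" using s2 e by (simp add: s2'_def)
  qed
  have lpos: "tlen V d i j x th > 0" if "min sa sb \<le> x" "x \<le> max sa sb" for x
  proof -
    have "min (p1 + q1 * sa) (p1 + q1 * sb) \<le> p1 + q1 * x" using aff_between that by blast
    moreover have "p1 + q1 * sa > 0" "p1 + q1 * sb > 0" using onA(4) onB(4) pq1 by simp_all
    ultimately show ?thesis using pq1 by simp
  qed
  have t2pos: "\<tau>2 > 0" using hu(1) lpos sig2 by simp
  have tspos: "tlen V d i j s th > 0" using lpos s by simp
  have T2pos: "T2 > 0" using T by (simp add: T2_def)
  have inT: "T2 \<in> Tset i s th2"
    using T2pos hit2 on_side_in[OF ons2] side_sub_bdry[OF ij(2)] by (auto simp: Tset_def)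
  have low: "T2 \<le> t" if tT: "t \<in> Tset i s th2" for t
  proof (rule ccontr)
    assume "\<not> T2 \<le> t"
    then have tl: "t < T2" by simp
    have tp: "0 < t" "xl V d i s + of_real t * dir V d i th2 \<in> bdry V d" using tT by (auto simp: Tset_def)
    define nu where "nu = t / T2"
    have nu: "0 < nu" "nu < 1" using tp tl T2pos by (auto simp: nu_def)
    have tv: "t = nu * T2" using T2pos by (simp add: nu_def)
    have "xl V d i s + of_real t * dir V d i th2
        = xl V d i s + of_real nu * (of_real T2 * dir V d i th2)" by (simp add: tv)
    also have "\<dots> = xl V d i s + of_real nu * (xl V d j s2' - xl V d i s)"
    proof -
      have "of_real T2 * dir V d i th2 = xl V d j s2' - xl V d i s" using hit2 by (simp add: algebra_simps)
      then show ?thesis by simp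
    qed
    also have "\<dots> = (1 - of_real nu) * xl V d i s + of_real nu * (xl V d i \<sigma>2 + of_real \<tau>2 * dir V d i th)"
      using e2 by (simp add: algebra_simps)
    also have "\<dots> = xl V d i ((1-nu) * s + nu * \<sigma>2) + of_real (nu * \<tau>2) * dir V d i th"
      unfolding xl_aff by (simp add: algebra_simps)
    finally have pt: "xl V d i s + of_real t * dir V d i th2
        = xl V d i ((1-nu) * s + nu * \<sigma>2) + of_real (nu * \<tau>2) * dir V d i th" .
    have sg: "min sa sb < (1-nu) * s + nu * \<sigma>2 \<and> (1-nu) * s + nu * \<sigma>2 < max sa sb"
      using conv_between[of sa sb s \<sigma>2 nu] s sig2 nu by simp
    have "tlen V d i j ((1-nu) * s + nu * \<sigma>2) th = (1-nu) * tlen V d i j s th + nu * \<tau>2"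
      using pq1 hu(1) by (simp add: algebra_simps)
    moreover have "(1-nu) * tlen V d i j s th > 0" using nu tspos by simp
    ultimately have lt: "nu * \<tau>2 < tlen V d i j ((1-nu) * s + nu * \<sigma>2) th" by simp
    have "xl V d i ((1-nu) * s + nu * \<sigma>2) + of_real (nu * \<tau>2) * dir V d i th \<notin> bdry V d"
      using core[OF ij ba bb cb, of "(1-nu) * s + nu * \<sigma>2" "nu * \<tau>2"] sg lt nu t2pos by simp
    then show False using pt tp by simp
  qed
  have inf: "Inf (Tset i s th2) = T2" by (rule cInf_eq_minimum[OF inT low])
  show ?thesis unfolding bill_iff fst_conv snd_conv inf
    using ons th2 inT hit2 ons2 by (simp add: s2'_def)
qed

end


context pg begin

lemma step_deriv:
  assumes ij: "i<d" "j<d" and c: "cos (bt i j - t0) \<noteq> 0"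
    and f: "(f has_real_derivative f') (at 1)" and g: "(g has_real_derivative g') (at 1)"
    and g1: "g 1 = t0"
  shows "((\<lambda>x. snew V d i j (f x) (g x)) has_real_derivative
     (- (cos t0 / cos (bt i j - t0)) * f' - (tlen V d i j (f 1) t0 / cos (bt i j - t0)) * g')) (at 1)"
proof -
  define X where "X x = Bc i j - (f x - S0 V d i) * sin (bt i j)" for x
  define Q where "Q x = sin (bt i j - g x) / cos (bt i j - g x)" for x
  have e: "(\<lambda>x. snew V d i j (f x) (g x)) =
      (\<lambda>x. S0 V d j + (Ac i j - (f x - S0 V d i) * cos (bt i j)) + X x * Q x)"
    by (rule ext) (simp add: snew_closed[OF ij] tlen_closed[OF ij] X_def Q_def)
  have dX: "(X has_real_derivative (- (f' * sin (bt i j)))) (at 1)"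
    unfolding X_def by (auto intro!: derivative_eq_intros f)
  have dS: "((\<lambda>x. sin (bt i j - g x)) has_real_derivative (cos (bt i j - t0) * (0 - g'))) (at 1)"
    using DERIV_chain2[OF DERIV_sin DERIV_diff[OF DERIV_const g]] g1 by simp
  have dC: "((\<lambda>x. cos (bt i j - g x)) has_real_derivative (- sin (bt i j - t0) * (0 - g'))) (at 1)"
    using DERIV_chain2[OF DERIV_cos DERIV_diff[OF DERIV_const g]] g1 by simp
  have dQ: "(Q has_real_derivative
      ((cos (bt i j - t0) * (0 - g')) * cos (bt i j - t0) - sin (bt i j - t0) * (- sin (bt i j - t0) * (0 - g')))
       / (cos (bt i j - t0) * cos (bt i j - t0))) (at 1)"
    unfolding Q_def using DERIV_divide[OF dS dC] g1 c by simp
  define Qd where "Qd = ((cos (bt i j - t0) * (0 - g')) * cos (bt i j - t0) - sin (bt i j - t0) * (- sin (bt i j - t0) * (0 - g')))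
       / (cos (bt i j - t0) * cos (bt i j - t0))"
  have dall: "((\<lambda>x. S0 V d j + (Ac i j - (f x - S0 V d i) * cos (bt i j)) + X x * Q x) has_real_derivative
      (0 + (0 - (f' - 0) * cos (bt i j)) + ((- (f' * sin (bt i j))) * Q 1 + Qd * X 1))) (at 1)"
    unfolding Qd_def
    by (rule DERIV_add[OF DERIV_add[OF DERIV_const DERIV_diff[OF DERIV_const DERIV_cmult_right[OF DERIV_diff[OF f DERIV_const]]]] DERIV_mult[OF dX dQ]])
  have ct0: "cos t0 = cos (bt i j) * cos (bt i j - t0) + sin (bt i j) * sin (bt i j - t0)"
    using cos_diff[of "bt i j" "bt i j - t0"] by simp
  have sc: "(sin (bt i j - t0))^2 + (cos (bt i j - t0))^2 = 1" by simp
  have sc2: "sin (bt i j - t0) * sin (bt i j - t0) = 1 - cos (bt i j - t0) * cos (bt i j - t0)"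
    using sc by (simp add: power2_eq_square)
  have tl: "tlen V d i j (f 1) t0 = X 1 / cos (bt i j - t0)" by (simp add: tlen_closed[OF ij] X_def)
  have Q1: "Q 1 = sin (bt i j - t0) / cos (bt i j - t0)" by (simp add: Q_def g1)
  have eq: "0 + (0 - (f' - 0) * cos (bt i j)) + ((- (f' * sin (bt i j))) * Q 1 + Qd * X 1)
     = - (cos t0 / cos (bt i j - t0)) * f' - (tlen V d i j (f 1) t0 / cos (bt i j - t0)) * g'"
    unfolding tl Q1 ct0 Qd_def using c sc by (simp add: field_simps power2_eq_square) (simp add: algebra_simps sc2)
  show ?thesis unfolding e using dall eq by simp
qed

end

lemma sum_nat_real: "(\<Sum>j<K. real j) * 2 = real K * (real K - 1)"
  by (induction K) (simp_all add: algebra_simps)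

lemma dsum_pow: "((\<lambda>x::real. \<Sum>j<K. x ^ j) has_real_derivative (\<Sum>j<K. real j)) (at 1)"
proof -
  have "((\<lambda>x::real. \<Sum>j<K. x ^ j) has_real_derivative (\<Sum>j<K. real j * 1 ^ (j - Suc 0))) (at 1)"
    by (intro DERIV_sum DERIV_pow)
  then show ?thesis by simp
qed


locale cyl = pg +
  fixes n :: nat and it :: "nat \<Rightarrow> nat" and th0 :: real
  assumes n2: "2 \<le> n" and it_range: "\<forall>k. it k < d"
    and th0_eq: "th0 = (1 / (2 * real n)) *
          (\<Sum>k<2*n. (-1) ^ (k+1) * real k * beta V d (it k) (it (Suc k)))"
    and per: "thk V d it th0 (2*n) = th0"
    and ang: "\<forall>k\<le>2*n. \<bar>thk V d it th0 k\<bar> < pi/2"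
begin

definition bb :: "nat \<Rightarrow> real" where "bb k = beta V d (it k) (it (Suc k))"
abbreviation th :: "nat \<Rightarrow> real" where "th k \<equiv> thk V d it th0 k"
definition cc :: "nat \<Rightarrow> real" where "cc m = (-1)^m * bb m"

lemma th_Suc: "th (Suc k) = bb k - th k" unfolding bb_def by simp

lemma npos: "real n > 0" using n2 by simp

lemma th_closed: "(-1)^m * th m = th0 - (\<Sum>k<m. cc k)"
proof (induction m)
  case 0 then show ?case by simp
next
  case (Suc m)
  have "(-1)^(Suc m) * th (Suc m) = - ((-1)^m * bb m) + (-1)^m * th m"
    by (simp add: bb_def algebra_simps)
  also have "\<dots> = th0 - (\<Sum>k<Suc m. cc k)" using Suc.IH by (simp add: cc_def)
  finally show ?case .
qed

lemma sum_cc: "(\<Sum>k<2*n. cc k) = 0" using th_closed[of "2*n"] per by simp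

lemma th0_cc: "(\<Sum>k<2*n. cc k * real k) = - (2 * real n * th0)"
proof -
  have "(\<Sum>k<2*n. (-1) ^ (k+1) * real k * beta V d (it k) (it (Suc k))) = - (\<Sum>k<2*n. cc k * real k)"
    by (simp add: cc_def bb_def sum_negf[symmetric] algebra_simps)
  then show ?thesis using th0_eq npos by (simp add: field_simps)
qed

definition N1 :: "real \<Rightarrow> real" where "N1 x = (\<Sum>m<2*n. cc m * (\<Sum>j<2*n-m. x^j))"
definition PP :: "real \<Rightarrow> real" where "PP x = (\<Sum>j<2*n. x^j)"
definition th0f :: "real \<Rightarrow> real" where "th0f x = N1 x / PP x"

fun thl :: "real \<Rightarrow> nat \<Rightarrow> real" where
  "thl x 0 = th0f x"
| "thl x (Suc k) = x * (bb k - thl x k)"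

fun skl :: "real \<Rightarrow> real \<Rightarrow> nat \<Rightarrow> real" where
  "skl x s 0 = s"
| "skl x s (Suc k) = snew V d (it k) (it (Suc k)) (skl x s k) (thl x k)"

lemma PP1: "PP 1 = 2 * real n" by (simp add: PP_def)

lemma N1_1: "N1 1 = 2 * real n * th0"
proof -
  have "N1 1 = (\<Sum>m<2*n. cc m * (2 * real n - real m))"
    unfolding N1_def by (rule sum.cong) (auto simp: of_nat_diff)
  also have "\<dots> = 2 * real n * (\<Sum>m<2*n. cc m) - (\<Sum>m<2*n. cc m * real m)"
    by (simp add: sum_distrib_left sum_subtractf algebra_simps)
  also have "\<dots> = 2 * real n * th0" using sum_cc th0_cc by simp
  finally show ?thesis .
qed

lemma th0f_1: "th0f 1 = th0" using npos by (simp add: th0f_def N1_1 PP1)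

lemma thl_one: "thl 1 k = th k"
  by (induction k) (simp_all add: th0f_1 bb_def)

lemma skl_one: "skl 1 s k = sk V d it th0 s k"
  by (induction k) (simp_all add: thl_one)

lemma thl_formula: "(-1)^k * thl x k = x^k * th0f x - (\<Sum>m<k. cc m * x^(k-m))"
proof (induction k)
  case 0 then show ?case by simp
next
  case (Suc k)
  have "(-1)^(Suc k) * thl x (Suc k) = - x * ((-1)^k * bb k) + x * ((-1)^k * thl x k)"
    by (simp add: algebra_simps)
  also have "\<dots> = - x * cc k + x * (x^k * th0f x - (\<Sum>m<k. cc m * x^(k-m)))"
    using Suc.IH by (simp add: cc_def)
  also have "\<dots> = x^(Suc k) * th0f x - (\<Sum>m<Suc k. cc m * x^(Suc k - m))"
  proof -
    have "(\<Sum>m<k. cc m * x^(Suc k - m)) = x * (\<Sum>m<k. cc m * x^(k-m))"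
      by (simp add: sum_distrib_left Suc_diff_le algebra_simps)
    then show ?thesis by (simp add: algebra_simps)
  qed
  finally show ?case .
qed

lemma PP_pos: "x > 0 \<Longrightarrow> PP x > 0"
  unfolding PP_def using n2 by (intro sum_pos) (auto simp: lessThan_empty_iff)

lemma thl_per: assumes x: "x > 0" shows "thl x (2*n) = thl x 0"
proof -
  have "thl x (2*n) = x^(2*n) * th0f x - (\<Sum>m<2*n. cc m * x^(2*n-m))"
    using thl_formula[of "2*n" x] by simp
  moreover have "(x^(2*n) - 1) * th0f x = (\<Sum>m<2*n. cc m * x^(2*n-m))"
  proof -
    have "(x^(2*n) - 1) * th0f x = (x - 1) * N1 x"
      using PP_pos[OF x] by (simp add: th0f_def PP_def power_diff_1_eq)
    also have "\<dots> = (\<Sum>m<2*n. (x - 1) * (cc m * (\<Sum>j<2*n-m. x^j)))"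
      unfolding N1_def by (rule sum_distrib_left)
    also have "\<dots> = (\<Sum>m<2*n. cc m * (x^(2*n-m) - 1))"
      by (rule sum.cong) (simp_all add: power_diff_1_eq mult_ac)
    also have "\<dots> = (\<Sum>m<2*n. cc m * x^(2*n-m)) - (\<Sum>m<2*n. cc m)"
      by (simp add: sum_subtractf algebra_simps)
    finally show ?thesis using sum_cc by simp
  qed
  ultimately show ?thesis by (simp add: algebra_simps)
qed

end


context cyl begin

abbreviation Om where "Om \<equiv> Omega0 V d n it"

lemma Om_cc: "Om = - (1 / (4 * real n)) * (\<Sum>k<2*n. cc k * real k * (2 * real n - real k))"
proof -
  have "(\<Sum>k<2*n. (-1) ^ (k+1) * real k * real (2*n - k) * beta V d (it k) (it (Suc k)))
      = - (\<Sum>k<2*n. cc k * real k * (2 * real n - real k))"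
    unfolding sum_negf[symmetric]
    by (rule sum.cong) (auto simp: cc_def bb_def of_nat_diff algebra_simps)
  then show ?thesis by (simp add: Omega0_def)
qed

lemma th0f_deriv: "(th0f has_real_derivative Om) (at 1)"
proof -
  define K where "K m = 2 * real n - real m" for m
  have sK: "(\<Sum>j<2*n-m. real j) = K m * (K m - 1) / 2" if "m < 2*n" for m
    using sum_nat_real[of "2*n-m"] that by (simp add: K_def of_nat_diff)
  have dN: "(N1 has_real_derivative (\<Sum>m<2*n. cc m * (\<Sum>j<2*n-m. real j))) (at 1)"
    unfolding N1_def[abs_def] by (intro DERIV_sum DERIV_cmult dsum_pow)
  have dP: "(PP has_real_derivative (\<Sum>j<2*n. real j)) (at 1)"
    unfolding PP_def[abs_def] by (rule dsum_pow)
  have d: "(th0f has_real_derivative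
     ((\<Sum>m<2*n. cc m * (\<Sum>j<2*n-m. real j)) * PP 1 - N1 1 * (\<Sum>j<2*n. real j)) / (PP 1 * PP 1)) (at 1)"
    unfolding th0f_def[abs_def] using DERIV_divide[OF dN dP] PP1 npos by simp
  define S1 where "S1 = (\<Sum>m<2*n. cc m * (K m * (K m - 1) / 2))"
  define S0 where "S0 = (\<Sum>m<2*n. cc m * K m)"
  define S2 where "S2 = (\<Sum>m<2*n. cc m * real m * K m)"
  have e1: "(\<Sum>m<2*n. cc m * (\<Sum>j<2*n-m. real j)) = S1"
    unfolding S1_def by (rule sum.cong) (simp_all add: sK)
  have e0: "N1 1 = S0"
    unfolding N1_def S0_def by (rule sum.cong) (auto simp: K_def of_nat_diff)
  have eP: "(\<Sum>j<2*n. real j) = real n * (2 * real n - 1)"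
    using sum_nat_real[of "2*n"] by (simp add: algebra_simps)
  have z: "(\<Sum>m<2*n. cc m * (K m * (K m - 1) / 2) * 2 - cc m * K m * (2 * real n - 1) + cc m * real m * K m) = 0"
    by (rule sum.neutral) (auto simp: K_def field_simps)
  have zz: "S1 * 2 - S0 * (2 * real n - 1) + S2 = 0"
    using z unfolding S1_def S0_def S2_def
    by (simp add: sum.distrib sum_subtractf sum_distrib_right)
  have om: "Om = - S2 / (4 * real n)"
    unfolding Om_cc S2_def K_def by simp
  have "((\<Sum>m<2*n. cc m * (\<Sum>j<2*n-m. real j)) * PP 1 - N1 1 * (\<Sum>j<2*n. real j)) / (PP 1 * PP 1) = Om"
  proof -
    have hl: "(a::real) * 2 - b + c = 0 \<Longrightarrow> a = (b - c) / 2" for a b c by (simp add: field_simps)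
    have S1eq: "S1 = (S0 * (2 * real n - 1) - S2) / 2" using hl[OF zz] .
    show ?thesis unfolding e1 e0 eP PP1 om S1eq using npos by (simp add: field_simps)
  qed
  then show ?thesis using d by simp
qed

fun thd :: "nat \<Rightarrow> real" where
  "thd 0 = Om"
| "thd (Suc k) = bb k - th k - thd k"

lemma thl_deriv: "((\<lambda>x. thl x k) has_real_derivative thd k) (at 1)"
proof (induction k)
  case 0 then show ?case using th0f_deriv by simp
next
  case (Suc k)
  have "((\<lambda>x. x * (bb k - thl x k)) has_real_derivative (1 * (bb k - thl 1 k) + (0 - thd k) * 1)) (at 1)"
    by (rule DERIV_mult[OF DERIV_ident DERIV_diff[OF DERIV_const Suc.IH]])
  then show ?case by (simp add: thl_one)
qed

definition Tm :: "real \<Rightarrow> nat \<Rightarrow> real" where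
  "Tm s m = tlen V d (it m) (it (Suc m)) (sk V d it th0 s m) (th m)"

fun sd :: "real \<Rightarrow> nat \<Rightarrow> real" where
  "sd s 0 = 0"
| "sd s (Suc k) = - (cos (th k) / cos (th (Suc k))) * sd s k - (Tm s k / cos (th (Suc k))) * thd k"

lemma cos_th: "k \<le> 2*n \<Longrightarrow> cos (th k) > 0"
  using ang cos_pos_abs by blast

lemma skl_deriv: "k \<le> 2*n \<Longrightarrow> ((\<lambda>x. skl x s k) has_real_derivative sd s k) (at 1)"
proof (induction k)
  case 0 then show ?case by simp
next
  case (Suc k)
  have c: "cos (bt (it k) (it (Suc k)) - th k) \<noteq> 0"
    using cos_th[OF Suc.prems] by (simp add: th_Suc bb_def)
  have "((\<lambda>x. snew V d (it k) (it (Suc k)) (skl x s k) (thl x k)) has_real_derivative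
     (- (cos (th k) / cos (bt (it k) (it (Suc k)) - th k)) * sd s k
      - (tlen V d (it k) (it (Suc k)) (skl 1 s k) (th k) / cos (bt (it k) (it (Suc k)) - th k)) * thd k)) (at 1)"
    by (rule step_deriv[OF _ _ c Suc.IH thl_deriv thl_one]) (use it_range Suc.prems in auto)
  then show ?case by (simp add: skl_one Tm_def bb_def)
qed

end


context cyl begin

lemma tau_id: "k \<le> 2*n \<Longrightarrow> (-1)^k * cos (th k) * sd s k = (\<Sum>m<k. (-1)^m * Tm s m * thd m)"
proof (induction k)
  case 0 then show ?case by simp
next
  case (Suc k)
  have c: "cos (th (Suc k)) \<noteq> 0" using cos_th[OF Suc.prems] by simp
  have "(-1)^(Suc k) * cos (th (Suc k)) * sd s (Suc k)
      = (-1)^k * cos (th k) * sd s k + (-1)^k * Tm s k * thd k"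
    using c by (simp add: field_simps)
  then show ?case using Suc by simp
qed

definition AA :: "nat \<Rightarrow> real" where "AA m = (\<Sum>p\<in>{1..m}. (-1)^p * th p)"

lemma AA_Suc: "AA (Suc m) = AA m + (-1)^(Suc m) * th (Suc m)"
  by (simp add: AA_def)

lemma thd_closed: "(-1)^m * thd m = Om + AA m"
proof (induction m)
  case 0 then show ?case by (simp add: AA_def)
next
  case (Suc m)
  have "(-1)^(Suc m) * thd (Suc m) = (-1)^(Suc m) * th (Suc m) + (-1)^m * thd m"
    by (simp add: bb_def algebra_simps)
  then show ?case using Suc AA_Suc by simp
qed

lemma Lk_Suc: "Lk V d it th0 s (Suc k) = Lk V d it th0 s k + Tm s k"
  by (simp add: Lk_def Tm_def)

lemma Y_id: "(\<Sum>m<k. Tm s m * AA m) = Lk V d it th0 s k * AA k - (\<Sum>p\<in>{1..k}. (-1)^p * th p * Lk V d it th0 s p)"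
proof (induction k)
  case 0 then show ?case by (simp add: Lk_def AA_def)
next
  case (Suc k)
  then show ?case by (simp add: Lk_Suc AA_Suc algebra_simps)
qed

lemma swap_sum: "(\<Sum>p\<in>{1..M}. (\<Sum>k<p. cc k)) = (\<Sum>k<M. cc k * (real M - real k))"
proof (induction M)
  case 0 then show ?case by simp
next
  case (Suc M)
  have "(\<Sum>p\<in>{1..Suc M}. (\<Sum>k<p. cc k)) = (\<Sum>k<M. cc k * (real M - real k)) + (\<Sum>k<Suc M. cc k)"
    using Suc by simp
  also have "\<dots> = (\<Sum>k<Suc M. cc k * (real (Suc M) - real k))"
    by (simp add: sum.distrib[symmetric] algebra_simps)
  finally show ?case .
qed

lemma AA_2n: "AA (2*n) = 0"
proof -
  have "AA (2*n) = (\<Sum>p\<in>{1..2*n}. th0 - (\<Sum>k<p. cc k))"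
    unfolding AA_def by (rule sum.cong) (simp_all add: th_closed)
  also have "\<dots> = 2 * real n * th0 - (\<Sum>k<2*n. cc k * (2 * real n - real k))"
  proof -
    have sw: "(\<Sum>p\<in>{1..2*n}. \<Sum>k<p. cc k) = (\<Sum>k<2*n. cc k * (2 * real n - real k))"
    proof -
      have r: "real (2*n) = 2 * real n" by simp
      show ?thesis using swap_sum[of "2*n"] unfolding r .
    qed
    show ?thesis unfolding sum_subtractf sw by simp
  qed
  also have "(\<Sum>k<2*n. cc k * (2 * real n - real k)) = 2 * real n * (\<Sum>k<2*n. cc k) - (\<Sum>k<2*n. cc k * real k)"
    by (simp add: sum_distrib_left sum_subtractf algebra_simps)
  finally show ?thesis using sum_cc th0_cc by simp
qed

lemma D_formula: "sd s (2*n) * cos th0 = Om * Lk V d it th0 s (2*n)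
   - (\<Sum>k=1..2*n. (-1) ^ k * thk V d it th0 (k mod (2*n)) * Lk V d it th0 s k)"
proof -
  have "sd s (2*n) * cos th0 = (\<Sum>m<2*n. (-1)^m * Tm s m * thd m)"
    using tau_id[of "2*n" s] per by (simp add: mult.commute)
  also have "\<dots> = (\<Sum>m<2*n. Tm s m * (Om + AA m))"
    by (rule sum.cong) (simp_all add: thd_closed[symmetric] algebra_simps)
  also have "\<dots> = Om * Lk V d it th0 s (2*n) + (\<Sum>m<2*n. Tm s m * AA m)"
    by (simp add: algebra_simps sum.distrib sum_distrib_left Lk_def Tm_def)
  also have "\<dots> = Om * Lk V d it th0 s (2*n) - (\<Sum>p\<in>{1..2*n}. (-1)^p * th p * Lk V d it th0 s p)"
    using Y_id[of s "2*n"] AA_2n by simp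
  also have "(\<Sum>p\<in>{1..2*n}. (-1)^p * th p * Lk V d it th0 s p)
      = (\<Sum>k=1..2*n. (-1) ^ k * thk V d it th0 (k mod (2*n)) * Lk V d it th0 s k)"
  proof (rule sum.cong)
    fix k assume k: "k \<in> {1..2*n}"
    show "(-1)^k * th k * Lk V d it th0 s k = (-1) ^ k * thk V d it th0 (k mod (2*n)) * Lk V d it th0 s k"
    proof (cases "k = 2*n")
      case True then show ?thesis using per by simp
    next
      case False then have "k mod (2*n) = k" using k by simp
      then show ?thesis by simp
    qed
  qed simp
  finally show ?thesis .
qed

end


context pg begin

lemma tlen_diff: "i<d \<Longrightarrow> j<d \<Longrightarrow>
  tlen V d i j s th - tlen V d i j s' th = - (s - s') * sin (bt i j) / cos (bt i j - th)"
  by (simp add: tlen_closed diff_divide_distrib[symmetric] algebra_simps)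

lemma snew_diff:
  assumes ij: "i<d" "j<d" and c: "cos (bt i j - th) \<noteq> 0"
  shows "snew V d i j s th - snew V d i j s' th = - (s - s') * cos th / cos (bt i j - th)"
proof -
  have ct: "cos th = cos (bt i j) * cos (bt i j - th) + sin (bt i j) * sin (bt i j - th)"
    using cos_diff[of "bt i j" "bt i j - th"] by simp
  have "snew V d i j s th - snew V d i j s' th
     = - (s - s') * cos (bt i j) + (tlen V d i j s th - tlen V d i j s' th) * sin (bt i j - th)"
    by (simp add: snew_closed[OF ij] algebra_simps)
  also have "\<dots> = - (s - s') * cos th / cos (bt i j - th)"
    unfolding tlen_diff[OF ij] ct using c by (simp add: field_simps)
  finally show ?thesis .
qed

end

context cyl begin

lemma skl_aff: "skl x s k = skl x 0 k + s * (skl x 1 k - skl x 0 k)"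
proof (induction k arbitrary: s)
  case 0 then show ?case by simp
next
  case (Suc k)
  obtain p q where pq: "\<forall>z. snew V d (it k) (it (Suc k)) z (thl x k) = p + q * z"
    using snew_aff[of "it k" "it (Suc k)" "thl x k"] it_range by blast
  have e: "\<And>z. skl x z (Suc k) = p + q * skl x z k" using pq by simp
  show ?case unfolding e Suc.IH[of s] by (simp add: algebra_simps)
qed

lemma sk_aff: "sk V d it th0 s k = sk V d it th0 0 k + s * (sk V d it th0 1 k - sk V d it th0 0 k)"
  using skl_aff[of 1 s k] by (simp add: skl_one)

lemma delta_id: "k \<le> 2*n \<Longrightarrow>
   (-1)^k * cos (th k) * (sk V d it th0 y k - sk V d it th0 x k) = cos th0 * (y - x)"
proof (induction k)
  case 0 then show ?case by simp
next
  case (Suc k)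
  have c: "cos (bt (it k) (it (Suc k)) - th k) \<noteq> 0"
    using cos_th[OF Suc.prems] by (simp add: th_Suc bb_def)
  have c1: "cos (th (Suc k)) \<noteq> 0" using cos_th[OF Suc.prems] by simp
  have "sk V d it th0 y (Suc k) - sk V d it th0 x (Suc k)
      = snew V d (it k) (it (Suc k)) (sk V d it th0 y k) (th k) - snew V d (it k) (it (Suc k)) (sk V d it th0 x k) (th k)"
    by simp
  also have "\<dots> = - (sk V d it th0 y k - sk V d it th0 x k) * cos (th k) / cos (bt (it k) (it (Suc k)) - th k)"
    by (rule snew_diff[OF _ _ c]) (use it_range in auto)
  also have "cos (bt (it k) (it (Suc k)) - th k) = cos (th (Suc k))" by (simp add: th_Suc bb_def)
  finally have "sk V d it th0 y (Suc k) - sk V d it th0 x (Suc k)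
      = - (sk V d it th0 y k - sk V d it th0 x k) * cos (th k) / cos (th (Suc k))" .
  moreover have gen: "\<And>C D a. C \<noteq> 0 \<Longrightarrow> (-1)^(Suc k) * C * (- D * a / C) = (-1)^k * a * (D::real)"
    by (simp add: field_simps)
  ultimately have "(-1)^(Suc k) * cos (th (Suc k)) * (sk V d it th0 y (Suc k) - sk V d it th0 x (Suc k))
      = (-1)^k * cos (th k) * (sk V d it th0 y k - sk V d it th0 x k)"
    using c1 by (simp only:)
  then show ?case using Suc by simp
qed

lemma tan_sum: "k \<le> 2*n \<Longrightarrow> (\<Sum>m<k. (-1)^m * (tan (th m) + tan (th (Suc m)))) = tan th0 - (-1)^k * tan (th k)"
  by (induction k) (simp_all add: algebra_simps)

lemma Lconst: "Lk V d it th0 y (2*n) = Lk V d it th0 x (2*n)"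
proof -
  define K where "K = cos th0 * (y - x)"
  have trm: "Tm y m - Tm x m = - K * ((-1)^m * (tan (th m) + tan (th (Suc m))))" if m: "m < 2*n" for m
  proof -
    have c0: "cos (th m) > 0" "cos (th (Suc m)) > 0" using cos_th[of m] cos_th[of "Suc m"] m by auto
    have dl: "sk V d it th0 y m - sk V d it th0 x m = (-1)^m * K / cos (th m)"
      using delta_id[of m y x] m c0 by (cases "even m") (simp_all add: K_def field_simps)
    have "Tm y m - Tm x m = - (sk V d it th0 y m - sk V d it th0 x m) * sin (bb m) / cos (th (Suc m))"
      unfolding Tm_def using tlen_diff it_range by (simp add: th_Suc bb_def)
    also have "sin (bb m) = sin (th m) * cos (th (Suc m)) + cos (th m) * sin (th (Suc m))"
      using sin_add[of "th m" "th (Suc m)"] by (simp add: bb_def)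
    finally show ?thesis unfolding dl tan_def using c0 by (simp add: field_simps)
  qed
  have "Lk V d it th0 y (2*n) - Lk V d it th0 x (2*n) = (\<Sum>m<2*n. Tm y m - Tm x m)"
    by (simp add: Lk_def Tm_def sum_subtractf)
  also have "\<dots> = - K * (\<Sum>m<2*n. (-1)^m * (tan (th m) + tan (th (Suc m))))"
    by (simp add: trm sum_distrib_left)
  also have "\<dots> = 0" using tan_sum[of "2*n"] per by simp
  finally show ?thesis by simp
qed

end


lemma between_strict:
  fixes x y rho :: real
  assumes "x \<noteq> y" "0 < rho" "rho < 1"
  shows "min x y < x + rho * (y - x) \<and> x + rho * (y - x) < max x y"
proof (cases "x < y")
  case True
  have h1: "0 < rho * (y - x)" using assms True by simp
  have h3: "0 < (1 - rho) * (y - x)" using assms True by simp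
  have e: "(1 - rho) * (y - x) = (y - x) - rho * (y - x)" by (simp add: algebra_simps)
  have m: "min x y = x" "max x y = y" using True by auto
  show ?thesis unfolding m using h1 h3 e by linarith
next
  case False
  then have yx: "y < x" using assms by simp
  have h1: "0 < rho * (x - y)" using assms yx by simp
  have h3: "0 < (1 - rho) * (x - y)" using assms yx by simp
  have e: "(1 - rho) * (x - y) = (x - y) - rho * (x - y)" "rho * (y - x) = - (rho * (x - y))"
    by (simp_all add: algebra_simps)
  have m: "min x y = y" "max x y = x" using yx by auto
  show ?thesis unfolding m using h1 h3 e by linarith
qed

context pg begin

lemma orbit1:
  assumes po: "porbit V d 1 n it q" and q0: "q 0 = (s, th0)" and n: "0 < n"
  shows "(\<forall>k\<le>2*n. q k = (sk V d it th0 s k, thk V d it th0 k))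
     \<and> (\<forall>k\<le>2*n. \<bar>thk V d it th0 k\<bar> < pi/2)
     \<and> thk V d it th0 (2*n) = th0 \<and> sk V d it th0 s (2*n) = s
     \<and> (\<forall>k<2*n. bill V d (it k) (it (Suc k)) (sk V d it th0 s k, thk V d it th0 k)
            (sk V d it th0 s (Suc k), thk V d it th0 (Suc k)))"
proof -
  have B: "bill V d (it k) (it (Suc k)) (q k) (q (Suc k))" if k: "k < 2*n" for k
    using po k by (auto simp: porbit_def bill_lam_def)
  have per: "q (2*n) = q 0" using po by (simp add: porbit_def)
  have angq: "\<bar>snd (q k)\<bar> < pi/2" if k: "k \<le> 2*n" for k
  proof (cases "k < 2*n")
    case True then show ?thesis using B[OF True] by (simp add: bill_iff)
  next
    case False
    then have "k = 2*n" using k by simp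
    then have "snd (q k) = snd (q 0)" using per by simp
    then show ?thesis using B[of 0] n by (simp add: bill_iff)
  qed
  have Q: "q k = (sk V d it th0 s k, thk V d it th0 k)" if "k \<le> 2*n" for k
    using that
  proof (induction k)
    case 0 then show ?case using q0 by simp
  next
    case (Suc k)
    have k: "k < 2*n" using Suc.prems by simp
    obtain s' t' where st: "q (Suc k) = (s', t')" by (cases "q (Suc k)")
    have b: "bill V d (it k) (it (Suc k)) (sk V d it th0 s k, thk V d it th0 k) (s', t')"
      using B[OF k] Suc.IH k st by simp
    have "cos t' \<noteq> 0" using angq[OF Suc.prems] st cos_pos_abs by force
    from bill_imp[OF b this] have "t' = thk V d it th0 (Suc k)" "s' = sk V d it th0 s (Suc k)"
      by simp_all
    then show ?case using st by simp
  qed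
  show ?thesis
  proof (intro conjI allI impI)
    show "q k = (sk V d it th0 s k, thk V d it th0 k)" if "k \<le> 2*n" for k using Q that by blast
    show "\<bar>thk V d it th0 k\<bar> < pi/2" if "k \<le> 2*n" for k using Q[OF that] angq[OF that] by simp
    show "thk V d it th0 (2*n) = th0" using Q[of "2*n"] Q[of 0] per q0 by simp
    show "sk V d it th0 s (2*n) = s" using Q[of "2*n"] per q0 by simp
    show "bill V d (it k) (it (Suc k)) (sk V d it th0 s k, thk V d it th0 k)
            (sk V d it th0 s (Suc k), thk V d it th0 (Suc k))" if "k < 2*n" for k
      using B[OF that] Q[of k] Q[of "Suc k"] that by simp
  qed
qed

end


locale cyl2 = cyl +
  fixes a b :: real
  assumes ab: "a < b"
    and bla: "\<forall>k<2*n. bill V d (it k) (it (Suc k)) (sk V d it th0 a k, thk V d it th0 k)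
            (sk V d it th0 a (Suc k), thk V d it th0 (Suc k))"
    and blb: "\<forall>k<2*n. bill V d (it k) (it (Suc k)) (sk V d it th0 b k, thk V d it th0 k)
            (sk V d it th0 b (Suc k), thk V d it th0 (Suc k))"
    and fa: "sk V d it th0 a (2*n) = a" and fb: "sk V d it th0 b (2*n) = b"
    and Dapos: "sd a (2*n) > 0" and Dbneg: "sd b (2*n) < 0"
begin

abbreviation skk where "skk s k \<equiv> sk V d it th0 s k"
abbreviation Da where "Da \<equiv> sd a (2*n)"
abbreviation Db where "Db \<equiv> sd b (2*n)"
abbreviation ij1 where "ij1 k \<equiv> it (Suc k)"

definition rho where "rho = Da / (Da - Db)"
definition ss where "ss = a + rho * (b - a)"

lemma rho: "0 < rho" "rho < 1"
  using Dapos Dbneg by (auto simp: rho_def field_simps)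

lemma ss_ab: "a < ss" "ss < b"
proof -
  have "0 < rho * (b - a)" "rho * (b - a) < b - a"
    using rho ab by (auto intro: mult_strict_right_mono[of rho 1, simplified])
  then show "a < ss" "ss < b" by (auto simp: ss_def)
qed

lemma sk_ss: "skk ss k = skk a k + rho * (skk b k - skk a k)"
proof -
  have e1: "skk ss k = skk 0 k + ss * (skk 1 k - skk 0 k)" by (rule sk_aff)
  have e2: "skk a k = skk 0 k + a * (skk 1 k - skk 0 k)" by (rule sk_aff)
  have e3: "skk b k = skk 0 k + b * (skk 1 k - skk 0 k)" by (rule sk_aff)
  show ?thesis unfolding e1 e2 e3 by (simp add: ss_def algebra_simps)
qed

lemma sk_ne: "k \<le> 2*n \<Longrightarrow> skk a k \<noteq> skk b k"
proof
  assume k: "k \<le> 2*n" and e: "skk a k = skk b k"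
  have "cos th0 * (b - a) = 0" using delta_id[OF k, of b a] e by simp
  moreover have "cos th0 > 0" using cos_th[of 0] by simp
  ultimately show False using ab by simp
qed

lemma ss_btw: "k \<le> 2*n \<Longrightarrow> min (skk a k) (skk b k) < skk ss k \<and> skk ss k < max (skk a k) (skk b k)"
  unfolding sk_ss using between_strict[OF sk_ne rho] by blast

lemma ss_per: "skk ss (2*n) = ss"
  unfolding sk_ss fa fb by (simp add: ss_def)

lemma itl: "it k < d" using it_range by blast

lemma cbk: "k < 2*n \<Longrightarrow> \<bar>bt (it k) (ij1 k) - th k\<bar> < pi/2"
proof -
  assume k: "k < 2*n"
  have "Suc k \<le> 2*n" using k by simp
  then have "\<bar>th (Suc k)\<bar> < pi/2" using ang by blast
  then show ?thesis by simp
qed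

lemma bill_a: "k < 2*n \<Longrightarrow> bill V d (it k) (ij1 k) (skk a k, th k) (skk a (Suc k), bt (it k) (ij1 k) - th k)"
  using bla by simp
lemma bill_b: "k < 2*n \<Longrightarrow> bill V d (it k) (ij1 k) (skk b k, th k) (skk b (Suc k), bt (it k) (ij1 k) - th k)"
  using blb by simp

lemma tpos: assumes k: "k < 2*n" and x: "min (skk a k) (skk b k) \<le> x" "x \<le> max (skk a k) (skk b k)"
  shows "tlen V d (it k) (ij1 k) x (th k) > 0"
proof -
  obtain p q where pq: "\<forall>z. tlen V d (it k) (ij1 k) z (th k) = p + q * z" using tlen_aff itl by blast
  have A: "tlen V d (it k) (ij1 k) (skk a k) (th k) > 0" using bill_facts[OF bill_a[OF k] cbk[OF k]] by blast
  have B: "tlen V d (it k) (ij1 k) (skk b k) (th k) > 0" using bill_facts[OF bill_b[OF k] cbk[OF k]] by blast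
  have "min (p + q * skk a k) (p + q * skk b k) \<le> p + q * x" using aff_between x by blast
  then show ?thesis using A B pq by simp
qed

definition qs where "qs k = (skk ss k, th k)"

lemma qs_step: assumes k: "k < 2*n"
  shows "bill V d (it k) (ij1 k) (skk ss k, th k) (skk ss (Suc k), bt (it k) (ij1 k) - th k)"
proof -
  have c2: "cos (bt (it k) (ij1 k) - th k) \<noteq> 0" using cos_pos_abs[OF cbk[OF k]] by simp
  have th2: "\<bar>th k\<bar> < pi/2" using ang k by simp
  have T: "tlen V d (it k) (ij1 k) (skk ss k) (th k) > 0"
    using tpos[OF k] ss_btw[of k] k by simp
  have e: "snew V d (it k) (ij1 k) (skk ss k) (th k) = skk ss (Suc k)" by simp
  have "bill V d (it k) (ij1 k) (skk ss k, th k) (snew V d (it k) (ij1 k) (skk ss k) (th k), bt (it k) (ij1 k) - th k)"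
    by (rule chord[OF itl itl bill_a[OF k] bill_b[OF k] cbk[OF k] _ _ th2 c2 T])
       (use ss_btw[of k] ss_btw[of "Suc k"] k in auto)
  then show ?thesis by simp
qed

lemma qs_orbit: "porbit V d 1 n it qs"
  unfolding porbit_def bill_lam_def
proof (intro conjI allI impI)
  fix k assume k: "k < 2*n"
  show "\<exists>th'. bill V d (it k) (it (Suc k)) (qs k) (fst (qs (Suc k)), th') \<and> snd (qs (Suc k)) = 1 * th'"
    using qs_step[OF k] by (intro exI[of _ "bt (it k) (ij1 k) - th k"]) (simp add: qs_def)
next
  show "qs (2*n) = qs 0" using ss_per per by (simp add: qs_def)
qed

lemma qs0: "qs 0 = (ss, th0)" by (simp add: qs_def)

end


context cyl2 begin

definition Qa where "Qa x = (skl x a (2*n) - a) / (x - 1)"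
definition Qb where "Qb x = (skl x b (2*n) - b) / (x - 1)"
definition rr where "rr x = a - Qa x * (b - a) / (Qb x - Qa x)"
definition QL where "QL x k = (skl x (rr x) k, thl x k)"

lemma lim_Qa: "(Qa \<longlongrightarrow> Da) (at 1)"
proof -
  have dd: "((\<lambda>x. skl x a (2*n)) has_real_derivative Da) (at 1)" by (rule skl_deriv) simp
  have "((\<lambda>y. (skl y a (2*n) - skl 1 a (2*n)) / (y - 1)) \<longlongrightarrow> Da) (at 1)"
    using dd unfolding has_field_derivative_iff .
  moreover have "skl 1 a (2*n) = a" using fa by (simp add: skl_one)
  ultimately show ?thesis by (simp add: Qa_def[abs_def])
qed

lemma lim_Qb: "(Qb \<longlongrightarrow> Db) (at 1)"
proof -
  have dd: "((\<lambda>x. skl x b (2*n)) has_real_derivative Db) (at 1)" by (rule skl_deriv) simp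
  have "((\<lambda>y. (skl y b (2*n) - skl 1 b (2*n)) / (y - 1)) \<longlongrightarrow> Db) (at 1)"
    using dd unfolding has_field_derivative_iff .
  moreover have "skl 1 b (2*n) = b" using fb by (simp add: skl_one)
  ultimately show ?thesis by (simp add: Qb_def[abs_def])
qed

lemma ss_alt: "ss = a - Da * (b - a) / (Db - Da)"
  using Dapos Dbneg by (simp add: ss_def rho_def field_simps)

lemma lim_rr: "(rr \<longlongrightarrow> ss) (at 1)"
proof -
  have "((\<lambda>x. a - Qa x * (b - a) / (Qb x - Qa x)) \<longlongrightarrow> a - Da * (b - a) / (Db - Da)) (at 1)"
    using Dapos Dbneg by (intro tendsto_intros lim_Qa lim_Qb) auto
  then show ?thesis unfolding ss_alt by (simp add: rr_def[abs_def])
qed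

lemma cont_skl: "k \<le> 2*n \<Longrightarrow> ((\<lambda>x. skl x z k) \<longlongrightarrow> skl 1 z k) (at 1)"
  using DERIV_isCont[OF skl_deriv] isCont_def by blast

lemma cont_thl: "((\<lambda>x. thl x k) \<longlongrightarrow> th k) (at 1)"
  using DERIV_isCont[OF thl_deriv] isCont_def thl_one by metis

lemma lim_skl_rr: assumes k: "k \<le> 2*n" shows "((\<lambda>x. skl x (rr x) k) \<longlongrightarrow> skk ss k) (at 1)"
proof -
  have e: "(\<lambda>x. skl x (rr x) k) = (\<lambda>x. skl x 0 k + rr x * (skl x 1 k - skl x 0 k))"
    by (rule ext) (rule skl_aff)
  have "((\<lambda>x. skl x 0 k + rr x * (skl x 1 k - skl x 0 k)) \<longlongrightarrow> skl 1 0 k + ss * (skl 1 1 k - skl 1 0 k)) (at 1)"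
    by (intro tendsto_intros cont_skl[OF k] lim_rr)
  moreover have "skl 1 0 k + ss * (skl 1 1 k - skl 1 0 k) = skk ss k"
    using skl_aff[of 1 ss k] by (simp add: skl_one)
  ultimately show ?thesis unfolding e by simp
qed

lemma lim_QL: "k \<le> 2*n \<Longrightarrow> ((\<lambda>x. QL x k) \<longlongrightarrow> qs k) (at 1)"
  unfolding QL_def qs_def by (intro tendsto_Pair lim_skl_rr cont_thl)

lemma root: assumes x1: "x \<noteq> 1" and q: "Qb x \<noteq> Qa x" shows "skl x (rr x) (2*n) = rr x"
proof -
  define A where "A = skl x 0 (2*n)"
  define B where "B = skl x 1 (2*n) - skl x 0 (2*n)"
  have aff: "skl x z (2*n) = A + z * B" for z unfolding A_def B_def by (rule skl_aff)
  have xm: "x - 1 \<noteq> 0" using x1 by simp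
  have ea: "Qa x = (A + a * B - a) / (x - 1)" by (simp add: Qa_def aff)
  have eb: "Qb x = (A + b * B - b) / (x - 1)" by (simp add: Qb_def aff)
  have dq: "Qb x - Qa x = (B - 1) * (b - a) / (x - 1)" unfolding ea eb diff_divide_distrib[symmetric]
    by (rule arg_cong[where f="\<lambda>t. t / (x - 1)"]) (simp add: algebra_simps)
  then have B1: "B - 1 \<noteq> 0" using q by auto
  have ba: "b - a \<noteq> 0" using ab by simp
  have fr: "Qa x * (b - a) / (Qb x - Qa x) = (A + a * B - a) / (B - 1)"
  proof -
    have gen: "\<And>N y c e::real. y \<noteq> 0 \<Longrightarrow> c \<noteq> 0 \<Longrightarrow> e \<noteq> 0 \<Longrightarrow> (N / y) * c / (e * c / y) = N / e"
      by (simp add: field_simps)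
    show ?thesis unfolding dq unfolding ea by (rule gen[OF xm ba B1])
  qed
  have r: "rr x = a - (A + a * B - a) / (B - 1)"
    unfolding rr_def fr ..
  show ?thesis unfolding aff r using B1 by (simp add: field_simps)
qed

lemma porbit_QL:
  assumes x0: "0 < x" and x1: "x \<noteq> 1" and q: "Qb x \<noteq> Qa x"
    and h: "\<forall>k<2*n. \<bar>thl x k\<bar> < pi/2 \<and> cos (bt (it k) (ij1 k) - thl x k) \<noteq> 0
              \<and> tlen V d (it k) (ij1 k) (skl x (rr x) k) (thl x k) > 0"
    and bw: "\<forall>k\<le>2*n. min (skk a k) (skk b k) < skl x (rr x) k \<and> skl x (rr x) k < max (skk a k) (skk b k)"
  shows "porbit V d x n it (QL x)"
  unfolding porbit_def bill_lam_def
proof (intro conjI allI impI)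
  fix k assume k: "k < 2*n"
  have hk: "\<bar>thl x k\<bar> < pi/2" "cos (bt (it k) (ij1 k) - thl x k) \<noteq> 0"
     "tlen V d (it k) (ij1 k) (skl x (rr x) k) (thl x k) > 0" using h k by blast+
  have b1: "min (skk a k) (skk b k) < skl x (rr x) k" "skl x (rr x) k < max (skk a k) (skk b k)"
    using bw k by auto
  have b2: "min (skk a (Suc k)) (skk b (Suc k)) < skl x (rr x) (Suc k)"
      "skl x (rr x) (Suc k) < max (skk a (Suc k)) (skk b (Suc k))"
    using bw k by (auto simp del: skl.simps sk.simps)
  have "bill V d (it k) (ij1 k) (skl x (rr x) k, thl x k)
      (snew V d (it k) (ij1 k) (skl x (rr x) k) (thl x k), bt (it k) (ij1 k) - thl x k)"
    by (rule chord[OF itl itl bill_a[OF k] bill_b[OF k] cbk[OF k] b1 hk]) (use b2 in simp_all)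
  then show "\<exists>th'. bill V d (it k) (it (Suc k)) (QL x k) (fst (QL x (Suc k)), th') \<and> snd (QL x (Suc k)) = x * th'"
    by (intro exI[of _ "bt (it k) (ij1 k) - thl x k"]) (simp add: QL_def bb_def)
next
  show "QL x (2*n) = QL x 0" using root[OF x1 q] thl_per[OF x0] by (simp add: QL_def)
qed

end


context cyl2 begin

lemma ev_porbit: "eventually (\<lambda>x. 0 < x \<and> porbit V d x n it (QL x)) (at 1)"
proof -
  have e0: "eventually (\<lambda>x. 0 < x) (at (1::real))"
    by (rule order_tendstoD(1)[OF tendsto_ident_at]) simp
  have e1: "eventually (\<lambda>x. x \<noteq> 1) (at (1::real))" by (rule eventually_neq_at_within)
  have e2: "eventually (\<lambda>x. Qb x - Qa x < 0) (at 1)"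
    using order_tendstoD(2)[OF tendsto_diff[OF lim_Qb lim_Qa], of 0] Dapos Dbneg by simp
  have e3: "eventually (\<lambda>x. \<forall>k\<in>{..<2*n}. \<bar>thl x k\<bar> < pi/2 \<and> cos (bt (it k) (ij1 k) - thl x k) \<noteq> 0
              \<and> tlen V d (it k) (ij1 k) (skl x (rr x) k) (thl x k) > 0) (at 1)"
  proof (rule eventually_ball_finite, simp, intro ballI)
    fix k assume "k \<in> {..<2*n}"
    then have k: "k < 2*n" by simp
    have a1: "eventually (\<lambda>x. \<bar>thl x k\<bar> < pi/2) (at 1)"
    proof -
      have "\<bar>th k\<bar> < pi/2" using ang k by simp
      then show ?thesis using order_tendstoD(2)[OF tendsto_rabs[OF cont_thl[of k]]] by blast
    qed
    have a2: "eventually (\<lambda>x. 0 < cos (bt (it k) (ij1 k) - thl x k)) (at 1)"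
      using order_tendstoD(1)[OF tendsto_cos[OF tendsto_diff[OF tendsto_const cont_thl[of k]]], of 0]
        cos_pos_abs[OF cbk[OF k]] by simp
    have lt: "((\<lambda>x. tlen V d (it k) (ij1 k) (skl x (rr x) k) (thl x k))
        \<longlongrightarrow> tlen V d (it k) (ij1 k) (skk ss k) (th k)) (at 1)"
    proof -
      have c: "cos (bt (it k) (ij1 k) - th k) \<noteq> 0" using cos_pos_abs[OF cbk[OF k]] by simp
      have "((\<lambda>x. (Bc (it k) (ij1 k) - (skl x (rr x) k - S0 V d (it k)) * sin (bt (it k) (ij1 k)))
            / cos (bt (it k) (ij1 k) - thl x k))
          \<longlongrightarrow> (Bc (it k) (ij1 k) - (skk ss k - S0 V d (it k)) * sin (bt (it k) (ij1 k)))
            / cos (bt (it k) (ij1 k) - th k)) (at 1)"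
        using c k by (intro tendsto_intros lim_skl_rr cont_thl) auto
      then show ?thesis by (simp add: tlen_closed[OF itl itl])
    qed
    have tp: "tlen V d (it k) (ij1 k) (skk ss k) (th k) > 0"
      using tpos[OF k] ss_btw[of k] k by simp
    have a3: "eventually (\<lambda>x. 0 < tlen V d (it k) (ij1 k) (skl x (rr x) k) (thl x k)) (at 1)"
      using order_tendstoD(1)[OF lt tp] .
    show "eventually (\<lambda>x. \<bar>thl x k\<bar> < pi/2 \<and> cos (bt (it k) (ij1 k) - thl x k) \<noteq> 0
              \<and> tlen V d (it k) (ij1 k) (skl x (rr x) k) (thl x k) > 0) (at 1)"
      using a1 a2 a3 by eventually_elim auto
  qed
  have e4: "eventually (\<lambda>x. \<forall>k\<in>{..2*n}. min (skk a k) (skk b k) < skl x (rr x) k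
              \<and> skl x (rr x) k < max (skk a k) (skk b k)) (at 1)"
  proof (rule eventually_ball_finite, simp, intro ballI)
    fix k assume "k \<in> {..2*n}"
    then have k: "k \<le> 2*n" by simp
    show "eventually (\<lambda>x. min (skk a k) (skk b k) < skl x (rr x) k
              \<and> skl x (rr x) k < max (skk a k) (skk b k)) (at 1)"
      using order_tendstoD(1)[OF lim_skl_rr[OF k]] order_tendstoD(2)[OF lim_skl_rr[OF k]] ss_btw[OF k]
      by (auto intro: eventually_conj)
  qed
  show ?thesis
    using e0 e1 e2 e3 e4
  proof eventually_elim
    case (elim x)
    have "porbit V d x n it (QL x)"
      by (rule porbit_QL) (use elim in auto)
    then show ?case using elim by simp
  qed
qed

lemma plus_stable: "lam_plus_stable V d n it qs"
proof -
  have "eventually (\<lambda>x. 0 < x \<and> porbit V d x n it (QL x)) (at_right 1)"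
    using ev_porbit eventually_at_split by blast
  then obtain c where c: "c > 1" "\<And>y. y > 1 \<Longrightarrow> y < c \<Longrightarrow> 0 < y \<and> porbit V d y n it (QL y)"
    unfolding eventually_at_right_field by blast
  define l where "l m = 1 + (c - 1) * inverse (real (Suc (Suc m)))" for m
  have inv: "0 < inverse (real (Suc (Suc m)))" "inverse (real (Suc (Suc m))) < 1" for m
    by (auto simp: field_simps)
  have l1: "1 < l m" "l m < c" for m
  proof -
    have "0 < (c - 1) * inverse (real (Suc (Suc m)))" using c inv by simp
    moreover have "(c - 1) * inverse (real (Suc (Suc m))) < (c - 1) * 1"
      using c inv by (intro mult_strict_left_mono) auto
    ultimately show "1 < l m" "l m < c" by (auto simp: l_def)
  qed
  have dec: "l (Suc m) < l m" for m
  proof -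
    have "inverse (real (Suc (Suc (Suc m)))) < inverse (real (Suc (Suc m)))" by (simp add: field_simps)
    then show ?thesis using c by (simp add: l_def)
  qed
  have ll: "l \<longlonglongrightarrow> 1"
  proof -
    have "(\<lambda>m. inverse (real (Suc (Suc m)))) \<longlonglongrightarrow> 0"
      using LIMSEQ_Suc[OF LIMSEQ_inverse_real_of_nat] by simp
    then have "(\<lambda>m. 1 + (c - 1) * inverse (real (Suc (Suc m)))) \<longlonglongrightarrow> 1 + (c - 1) * 0"
      by (intro tendsto_intros)
    then show ?thesis by (simp add: l_def[abs_def])
  qed
  have fl: "filterlim l (at 1) sequentially"
    unfolding filterlim_at using ll l1 by (auto intro!: always_eventually) (metis less_irrefl)
  show ?thesis unfolding lam_plus_stable_def
  proof (intro conjI exI[of _ l] exI[of _ "\<lambda>m. QL (l m)"] allI impI)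
    show "porbit V d 1 n it qs" by (rule qs_orbit)
    show "0 < l m" for m using l1[of m] by simp
    show "l (Suc m) < l m" for m by (rule dec)
    show "l \<longlonglongrightarrow> 1" by (rule ll)
    show "porbit V d (l m) n it (QL (l m))" for m using c(2)[OF l1[of m]] by simp
    show "(\<lambda>m. QL (l m) k) \<longlonglongrightarrow> qs k" if "k \<le> 2*n" for k
      using filterlim_compose[OF lim_QL[OF that] fl] by simp
  qed
qed

lemma minus_stable: "lam_minus_stable V d n it qs"
proof -
  have "eventually (\<lambda>x. 0 < x \<and> porbit V d x n it (QL x)) (at_left 1)"
    using ev_porbit eventually_at_split by blast
  then obtain c where c: "c < 1" "\<And>y. y > c \<Longrightarrow> y < 1 \<Longrightarrow> 0 < y \<and> porbit V d y n it (QL y)"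
    unfolding eventually_at_left_field by blast
  define l where "l m = 1 - (1 - c) * inverse (real (Suc (Suc m)))" for m
  have inv: "0 < inverse (real (Suc (Suc m)))" "inverse (real (Suc (Suc m))) < 1" for m
    by (auto simp: field_simps)
  have l1: "c < l m" "l m < 1" for m
  proof -
    have "0 < (1 - c) * inverse (real (Suc (Suc m)))" using c inv by simp
    moreover have "(1 - c) * inverse (real (Suc (Suc m))) < (1 - c) * 1"
      using c inv by (intro mult_strict_left_mono) auto
    ultimately show "c < l m" "l m < 1" by (auto simp: l_def)
  qed
  have inc: "l m < l (Suc m)" for m
  proof -
    have "inverse (real (Suc (Suc (Suc m)))) < inverse (real (Suc (Suc m)))" by (simp add: field_simps)
    then show ?thesis using c by (simp add: l_def)
  qed
  have ll: "l \<longlonglongrightarrow> 1"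
  proof -
    have "(\<lambda>m. inverse (real (Suc (Suc m)))) \<longlonglongrightarrow> 0"
      using LIMSEQ_Suc[OF LIMSEQ_inverse_real_of_nat] by simp
    then have "(\<lambda>m. 1 - (1 - c) * inverse (real (Suc (Suc m)))) \<longlonglongrightarrow> 1 - (1 - c) * 0"
      by (intro tendsto_intros)
    then show ?thesis by (simp add: l_def[abs_def])
  qed
  have fl: "filterlim l (at 1) sequentially"
    unfolding filterlim_at using ll l1 by (auto intro!: always_eventually) (metis less_irrefl)
  show ?thesis unfolding lam_minus_stable_def
  proof (intro conjI exI[of _ l] exI[of _ "\<lambda>m. QL (l m)"] allI impI)
    show "porbit V d 1 n it qs" by (rule qs_orbit)
    show "0 < l m" for m using c(2)[OF l1[of m]] by simp
    show "l m < l (Suc m)" for m by (rule inc)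
    show "l \<longlonglongrightarrow> 1" by (rule ll)
    show "porbit V d (l m) n it (QL (l m))" for m using c(2)[OF l1[of m]] by simp
    show "(\<lambda>m. QL (l m) k) \<longlonglongrightarrow> qs k" if "k \<le> 2*n" for k
      using filterlim_compose[OF lim_QL[OF that] fl] by simp
  qed
qed

end


theorem theorem3p10:
  fixes V :: "nat \<Rightarrow> complex" and d n :: nat and it :: "nat \<Rightarrow> nat"
    and th0 a b :: real
  assumes polygon: "simple_ccw_polygon V d"
    and n2: "2 \<le> n"
    and it_range: "\<forall>k. it k < d"
    and it_per: "\<forall>k. it (k + 2*n) = it k"
    and th0_def: "th0 = (1 / (2 * real n)) *
          (\<Sum>k<2*n. (-1) ^ (k+1) * real k * beta V d (it k) (it (Suc k)))"
    and a_in: "a \<in> base V d n it th0"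
    and b_in: "b \<in> base V d n it th0"
    and ab: "a < b"
    and ineq_a: "(\<Sum>k=1..2*n. (-1) ^ k * thk V d it th0 (k mod (2*n)) * Lk V d it th0 a k)
                 < Omega0 V d n it * Lk V d it th0 a (2*n)"
    and ineq_b: "Omega0 V d n it * Lk V d it th0 a (2*n)
                 < (\<Sum>k=1..2*n. (-1) ^ k * thk V d it th0 (k mod (2*n)) * Lk V d it th0 b k)"
  shows "cyl_lam_stable V d n it th0 \<and>
         (\<exists>s q. a < s \<and> s < b \<and> q 0 = (s, th0) \<and>
                lam_plus_stable V d n it q \<and> lam_minus_stable V d n it q)"
proof -
  interpret pg V d by unfold_locales (rule polygon)
  have n0: "0 < n" using n2 by simp
  obtain qa where qa: "porbit V d 1 n it qa" "qa 0 = (a, th0)" using a_in by (auto simp: base_def)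
  obtain qb where qb: "porbit V d 1 n it qb" "qb 0 = (b, th0)" using b_in by (auto simp: base_def)
  note Oa = orbit1[OF qa n0]
  note Ob = orbit1[OF qb n0]
  interpret cyl V d n it th0
    by unfold_locales (use n2 it_range th0_def Oa in auto)
  have c0: "cos th0 > 0" using cos_th[of 0] by simp
  have Da: "sd a (2*n) > 0"
  proof -
    have "sd a (2*n) * cos th0 > 0" using D_formula[of a] ineq_a by simp
    then show ?thesis using c0 by (simp add: zero_less_mult_iff)
  qed
  have Db: "sd b (2*n) < 0"
  proof -
    have "sd b (2*n) * cos th0 < 0" using D_formula[of b] ineq_b Lconst[of b a] by simp
    then show ?thesis using c0 by (simp add: mult_less_0_iff)
  qed
  interpret cyl2 V d n it th0 a b
    by unfold_locales (use ab Oa Ob Da Db in auto)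
  have ssb: "ss \<in> base V d n it th0" using qs_orbit qs0 by (auto simp: base_def)
  show ?thesis
    unfolding cyl_lam_stable_def
    using ssb qs0 plus_stable minus_stable ss_ab by blast
qed


end
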